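(* Let $\Pi\subset\mathbb R^d$ be a $d$-dimensional convex polytope that is a semisimplex, i.e. $\Pi$ is affinely isomorphic (equivalently, isomorphic as a barycentric algebra) to a direct product $\Delta_1\times\dots\times\Delta_k$ of simplices. Let $V$ be the vertex set of $\Pi$. Then for every point $\mathbf x\in\Pi$ and every vertex $\mathbf v\in V$, the Wachspress coordinate of $\mathbf x$ with respect to $\mathbf v$ equals the Gibbs coordinate of $\mathbf x$ with respect to $\mathbf v$.
   Context: A $d$-dimensional polytope is simple if each vertex is incident to exactly $d$ edges (a direct product of simplices is simple). Wachspress coordinates on a simple $d$-polytope $\Pi$ with vertices $\mathbf v_1,\dots,\mathbf v_n$: for an interior point $\mathbf x$ and a vertex $\mathbf v_i$, let $\mathbf n_{i_1},\dots,\mathbf n_{i_d}$ be the outward unit normals of the $d$ facets incident with $\mathbf v_i$, ordered according to the orientation of $\Pi$ (so that the determinant below is positive), and set $$w_i(\mathbf x)=\frac{d!\,\det[\mathbf n_{i_1},\dots,\mathbf n_{i_d}]}{\langle \mathbf v_i-\mathbf x,\mathbf n_{i_1}\rangle\cdots\langle \mathbf v_i-\mathbf x,\mathbf n_{i_d}\rangle}.$$ The Wachspress coordinates of $\mathbf x$ are $w(\mathbf x,\mathbf v_i)=w_i(\mathbf x)/\sum_{j=1}^n w_j(\mathbf x)$; they are extended to the boundary of $\Pi$ by continuity. Gibbs coordinates: for $\mathbf x\in\Pi$, among all probability distributions $(p_{\mathbf v})_{\mathbf v\in V}$ on $V$ with $\sum_{\mathbf v\in V}p_{\mathbf v}\mathbf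 v=\mathbf x$, there is a unique one maximizing the entropy $-\sum_{\mathbf v}p_{\mathbf v}\log p_{\mathbf v}$ (with $0\log 0=0$); its values are the Gibbs coordinates of $\mathbf x$ with respect to the vertices $\mathbf v\in V$ (taking the inclusion of the vertex set into $\Pi$ as the valuation function). *)

theory Defs
  imports "HOL-Analysis.Analysis"
begin

text \<open>The direct product of standard simplices Delta_{n 0} x ... x Delta_{n (k-1)}:
  a point is a family p i j (i < k, j \<le> n i) with each row p i a probability vector;
  entries outside the index range are zero.\<close>
definition prod_simplex :: "nat \<Rightarrow> (nat \<Rightarrow> nat) \<Rightarrow> (nat \<Rightarrow> nat \<Rightarrow> real) set" where
  "prod_simplex k n = {p. (\<forall>i j. (k \<le> i \<or> n i < j) \<longrightarrow> p i j = 0) \<and>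
      (\<forall>i<k. (\<forall>j. 0 \<le> p i j) \<and> (\<Sum>j\<le>n i. p i j) = 1)}"

text \<open>The general affine map from the product of simplices into a real vector space
  (every affine map on the product has this form).\<close>
definition prod_simplex_map ::
  "nat \<Rightarrow> (nat \<Rightarrow> nat) \<Rightarrow> (nat \<Rightarrow> nat \<Rightarrow> 'a::real_vector) \<Rightarrow> (nat \<Rightarrow> nat \<Rightarrow> real) \<Rightarrow> 'a" where
  "prod_simplex_map k n b p = (\<Sum>i<k. \<Sum>j\<le>n i. p i j *\<^sub>R b i j)"

definition semisimplex :: "'a::real_vector set \<Rightarrow> bool" where
  "semisimplex P \<longleftrightarrow> (\<exists>k n b. inj_on (prod_simplex_map k n b) (prod_simplex k n) \<and>
       prod_simplex_map k n b ` prod_simplex k n = P)"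

definition vertices :: "'a::real_vector set \<Rightarrow> 'a set" where
  "vertices P = {v. v extreme_point_of P}"

text \<open>Outward unit normal of a facet F of a full-dimensional polytope P.\<close>
definition outward_normal :: "'a::euclidean_space set \<Rightarrow> 'a set \<Rightarrow> 'a" where
  "outward_normal P F = (THE u. norm u = 1 \<and>
      (\<exists>h. P \<subseteq> {y. u \<bullet> y \<le> h} \<and> F \<subseteq> {y. u \<bullet> y = h}))"

definition facets_at :: "'a::euclidean_space set \<Rightarrow> 'a \<Rightarrow> 'a set set" where
  "facets_at P v = {F. F facet_of P \<and> v \<in> F}"

text \<open>det[n_{i_1},...,n_{i_d}] for the orientation-respecting ordering, i.e. the absolute value
  of the determinant of the matrix whose rows are the outward unit normals of the d facets
  at v (in any order).\<close>
definition normal_det :: "(real^'n) set \<Rightarrow> real^'n \<Rightarrow> real" where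
  "normal_det P v = (let g = (SOME g::'n \<Rightarrow> (real^'n) set. bij_betw g UNIV (facets_at P v))
     in \<bar>det (\<chi> i. outward_normal P (g i))\<bar>)"

definition wachspress_weight :: "(real^'n) set \<Rightarrow> real^'n \<Rightarrow> real^'n \<Rightarrow> real" where
  "wachspress_weight P v x = fact CARD('n) * normal_det P v /
      (\<Prod>F\<in>facets_at P v. (v - x) \<bullet> outward_normal P F)"

definition wachspress_interior :: "(real^'n) set \<Rightarrow> real^'n \<Rightarrow> real^'n \<Rightarrow> real" where
  "wachspress_interior P x v =
     wachspress_weight P v x / (\<Sum>u\<in>vertices P. wachspress_weight P u x)"

definition wachspress :: "(real^'n) set \<Rightarrow> real^'n \<Rightarrow> real^'n \<Rightarrow> real" where
  "wachspress P x v = (if x \<in> interior P then wachspress_interior P x v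
     else Lim (at x within interior P) (\<lambda>y. wachspress_interior P y v))"

definition entropy :: "'a set \<Rightarrow> ('a \<Rightarrow> real) \<Rightarrow> real" where
  "entropy V p = - (\<Sum>v\<in>V. if p v = 0 then 0 else p v * ln (p v))"

definition barycentric_dists :: "'a::real_vector set \<Rightarrow> 'a \<Rightarrow> ('a \<Rightarrow> real) set" where
  "barycentric_dists V x = {p. (\<forall>v. v \<notin> V \<longrightarrow> p v = 0) \<and> (\<forall>v\<in>V. 0 \<le> p v) \<and>
      (\<Sum>v\<in>V. p v) = 1 \<and> (\<Sum>v\<in>V. p v *\<^sub>R v) = x}"

definition gibbs :: "'a::real_vector set \<Rightarrow> 'a \<Rightarrow> 'a \<Rightarrow> real" where
  "gibbs V x = (THE p. p \<in> barycentric_dists V x \<and>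
      (\<forall>q\<in>barycentric_dists V x. entropy V q \<le> entropy V p))"

end

theory Submission
  imports Defs
begin

lemma half_lt: "0 \<le> (r::real) \<Longrightarrow> r / (2 * (r + 1)) < 1"
  by (simp add: divide_less_eq)

locale psx =
  fixes k :: nat and n :: "nat \<Rightarrow> nat" and b :: "nat \<Rightarrow> nat \<Rightarrow> real^'d"
  assumes inj: "inj_on (prod_simplex_map k n b) (prod_simplex k n)"
    and dimP: "aff_dim (prod_simplex_map k n b ` prod_simplex k n) = int CARD('d)"
begin

abbreviation "f \<equiv> prod_simplex_map k n b"
abbreviation "S \<equiv> prod_simplex k n"
abbreviation "P \<equiv> f ` S"

definition Wsp :: "(nat \<Rightarrow> nat \<Rightarrow> real) set" where
  "Wsp = {w. (\<forall>i j. (k \<le> i \<or> n i < j) \<longrightarrow> w i j = 0) \<and> (\<forall>i<k. (\<Sum>j\<le>n i. w i j) = 0)}"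

definition c :: "nat \<Rightarrow> nat \<Rightarrow> real" where
  "c i j = (if i < k \<and> j \<le> n i then 1 / (real (n i) + 1) else 0)"

lemma f_add: "f (\<lambda>i j. p i j + q i j) = f p + f q"
  by (simp add: prod_simplex_map_def scaleR_add_left sum.distrib)

lemma f_diff: "f (\<lambda>i j. p i j - q i j) = f p - f q"
  by (simp add: prod_simplex_map_def scaleR_diff_left sum_subtractf)

lemma f_scale: "f (\<lambda>i j. t * p i j) = t *\<^sub>R f p"
  by (simp add: prod_simplex_map_def scaleR_sum_right)

lemma f_zero: "f (\<lambda>i j. 0) = 0"
  by (simp add: prod_simplex_map_def)

lemma memS_I:
  assumes "\<And>i j. k \<le> i \<or> n i < j \<Longrightarrow> p i j = 0"
    and "\<And>i j. i < k \<Longrightarrow> j \<le> n i \<Longrightarrow> 0 \<le> p i j"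
    and "\<And>i. i < k \<Longrightarrow> (\<Sum>j\<le>n i. p i j) = 1"
  shows "p \<in> S"
proof -
  have "0 \<le> p i j" if "i < k" for i j
  proof (cases "j \<le> n i")
    case True then show ?thesis using assms(2) that by auto
  next
    case False then show ?thesis using assms(1)[of i j] by auto
  qed
  then show ?thesis using assms unfolding prod_simplex_def by blast
qed

lemma memS_D:
  assumes "p \<in> S"
  shows "\<And>i j. k \<le> i \<or> n i < j \<Longrightarrow> p i j = 0"
    and "\<And>i j. 0 \<le> p i j"
    and "\<And>i. i < k \<Longrightarrow> (\<Sum>j\<le>n i. p i j) = 1"
proof -
  show "\<And>i j. k \<le> i \<or> n i < j \<Longrightarrow> p i j = 0" using assms unfolding prod_simplex_def by blast
  show "\<And>i. i < k \<Longrightarrow> (\<Sum>j\<le>n i. p i j) = 1" using assms unfolding prod_simplex_def by blast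
  fix i j show "0 \<le> p i j"
  proof (cases "i < k")
    case True then show ?thesis using assms unfolding prod_simplex_def by blast
  next
    case False then show ?thesis using assms unfolding prod_simplex_def by auto
  qed
qed

lemma c_S: "c \<in> S"
proof -
  have "(\<Sum>j\<le>n i. c i j) = 1" if "i < k" for i
    using that by (simp add: c_def)
  then show ?thesis by (auto simp: prod_simplex_def c_def)
qed

lemma c_pos: "i < k \<Longrightarrow> j \<le> n i \<Longrightarrow> c i j > 0"
  by (simp add: c_def)

lemma S_diff_W: "p \<in> S \<Longrightarrow> q \<in> S \<Longrightarrow> (\<lambda>i j. p i j - q i j) \<in> Wsp"
  by (auto simp: prod_simplex_def Wsp_def sum_subtractf)

lemma injW:
  assumes w: "w \<in> Wsp" and fw: "f w = 0"
  shows "w = (\<lambda>i j. 0)"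
proof -
  define m where "m = 1 + (\<Sum>i<k. \<Sum>j\<le>n i. \<bar>w i j\<bar>)"
  define N where "N = (\<Sum>i<k. n i)"
  have m1: "m \<ge> 1" unfolding m_def by (simp add: sum_nonneg)
  have wm: "\<bar>w i j\<bar> \<le> m" if "i < k" "j \<le> n i" for i j
  proof -
    have "\<bar>w i j\<bar> \<le> (\<Sum>j\<le>n i. \<bar>w i j\<bar>)"
      using that by (intro member_le_sum) auto
    also have "\<dots> \<le> (\<Sum>i<k. \<Sum>j\<le>n i. \<bar>w i j\<bar>)"
      using that by (intro member_le_sum[where f="\<lambda>i. \<Sum>j\<le>n i. \<bar>w i j\<bar>"]) (auto intro: sum_nonneg)
    finally show ?thesis unfolding m_def by simp
  qed
  have nN: "n i \<le> N" if "i < k" for i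
    unfolding N_def using that by (intro member_le_sum) auto
  define t where "t = 1 / (m * (real N + 1))"
  have t0: "t > 0" using m1 by (simp add: t_def)
  define q where "q = (\<lambda>i j. c i j + t * w i j)"
  have "q \<in> S"
  proof -
    have "q i j \<ge> 0" if "i < k" "j \<le> n i" for i j
    proof -
      have "t * \<bar>w i j\<bar> \<le> t * m" using wm[OF that] t0 by simp
      also have "t * m = 1 / (real N + 1)" using m1 by (simp add: t_def)
      also have "\<dots> \<le> 1 / (real (n i) + 1)" using nN[OF that(1)]
        by (simp add: frac_le)
      also have "\<dots> = c i j" using that by (simp add: c_def)
      finally have "t * \<bar>w i j\<bar> \<le> c i j" .
      moreover have "- (t * \<bar>w i j\<bar>) \<le> t * w i j"
      proof -
        have "- \<bar>w i j\<bar> \<le> w i j" by linarith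
        then have "t * (- \<bar>w i j\<bar>) \<le> t * w i j" using t0 by (intro mult_left_mono) auto
        then show ?thesis by simp
      qed
      ultimately show ?thesis unfolding q_def by linarith
    qed
    moreover have "q i j \<ge> 0" if "i < k" "\<not> j \<le> n i" for i j
      using w that by (simp add: q_def c_def Wsp_def)
    moreover have "q i j = 0" if "k \<le> i \<or> n i < j" for i j
      using w that by (auto simp: q_def c_def Wsp_def)
    moreover have "(\<Sum>j\<le>n i. q i j) = 1" if "i < k" for i
    proof -
      have "(\<Sum>j\<le>n i. q i j) = (\<Sum>j\<le>n i. c i j) + t * (\<Sum>j\<le>n i. w i j)"
        by (simp add: q_def sum.distrib sum_distrib_left)
      then show ?thesis using that w c_S by (simp add: Wsp_def prod_simplex_def)
    qed
    ultimately show ?thesis by (intro memS_I) auto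
  qed
  moreover have "f q = f c"
    using f_add[of c "\<lambda>i j. t * w i j"] f_scale[of t w] fw by (simp add: q_def)
  ultimately have "q = c" using inj c_S by (meson inj_onD)
  then have "t * w i j = 0" for i j unfolding q_def
    by (metis (no_types) add_cancel_left_right)
  then show ?thesis using t0 by auto
qed

lemma W_zero: "(\<lambda>i j. 0) \<in> Wsp" by (simp add: Wsp_def)
lemma W_add: "w \<in> Wsp \<Longrightarrow> v \<in> Wsp \<Longrightarrow> (\<lambda>i j. w i j + v i j) \<in> Wsp"
  by (simp add: Wsp_def sum.distrib)
lemma W_scale: "w \<in> Wsp \<Longrightarrow> (\<lambda>i j. t * w i j) \<in> Wsp"
  by (simp add: Wsp_def flip: sum_distrib_left)
lemma W_diff: "w \<in> Wsp \<Longrightarrow> v \<in> Wsp \<Longrightarrow> (\<lambda>i j. w i j - v i j) \<in> Wsp"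
  by (simp add: Wsp_def sum_subtractf)

lemma W_unique: "w \<in> Wsp \<Longrightarrow> v \<in> Wsp \<Longrightarrow> f w = f v \<Longrightarrow> w = v"
proof -
  assume w: "w \<in> Wsp" and v: "v \<in> Wsp" and e: "f w = f v"
  have "(\<lambda>i j. w i j - v i j) = (\<lambda>i j. 0)"
    using injW[OF W_diff[OF w v]] f_diff[of w v] e by simp
  then have "w i j - v i j = 0" for i j by (drule_tac x=i in fun_cong, drule_tac x=j in fun_cong) simp
  then show ?thesis by (intro ext) simp
qed

lemma surjW: "\<exists>w\<in>Wsp. f w = x"
proof -
  define U where "U = f ` Wsp"
  have sU: "subspace U" unfolding subspace_def U_def
  proof (intro conjI ballI allI)
    have "f (\<lambda>i j. 0) \<in> f ` Wsp" using W_zero by (rule imageI)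
    then show "0 \<in> f ` Wsp" by (simp only: f_zero)
  next
    fix x y assume "x \<in> f ` Wsp" "y \<in> f ` Wsp"
    then obtain w v where "w \<in> Wsp" "v \<in> Wsp" "x = f w" "y = f v" by blast
    then show "x + y \<in> f ` Wsp" using W_add f_add[symmetric] by (intro rev_image_eqI) auto
  next
    fix t :: real and x assume "x \<in> f ` Wsp"
    then obtain w where "w \<in> Wsp" "x = f w" by blast
    then show "t *\<^sub>R x \<in> f ` Wsp" using W_scale f_scale[symmetric] by (intro rev_image_eqI) auto
  qed
  have sub: "(+) (- f c) ` P \<subseteq> U"
  proof
    fix y assume "y \<in> (+) (- f c) ` P"
    then obtain p where p: "p \<in> S" "y = - f c + f p" by blast
    then have "y = f (\<lambda>i j. p i j - c i j)" using f_diff by simp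
    then show "y \<in> U" unfolding U_def using S_diff_W[OF p(1) c_S] by blast
  qed
  have "f c \<in> affine hull P" using c_S by (simp add: hull_inc)
  then have "aff_dim P = int (dim ((+) (- f c) ` P))" by (rule aff_dim_eq_dim)
  then have "CARD('d) \<le> dim U" using dimP dim_subset[OF sub] by simp
  moreover have "dim U \<le> CARD('d)" using dim_subset_UNIV[of U] by simp
  ultimately have "dim U = DIM(real^'d)" by simp
  then have "span U = UNIV" using dim_eq_full by blast
  then have "U = UNIV" using sU span_eq_iff by blast
  then have "x \<in> f ` Wsp" unfolding U_def by simp
  then show ?thesis by (auto simp: image_iff)
qed

definition M :: "real^'d \<Rightarrow> nat \<Rightarrow> nat \<Rightarrow> real" where
  "M x = (THE w. w \<in> Wsp \<and> f w = x)"

lemma M_prop: "M x \<in> Wsp \<and> f (M x) = x"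
proof -
  obtain w where "w \<in> Wsp" "f w = x" using surjW by blast
  then have "\<exists>!w. w \<in> Wsp \<and> f w = x" using W_unique by blast
  then show ?thesis unfolding M_def by (rule theI')
qed

lemma M_W: "M x \<in> Wsp" and f_M: "f (M x) = x" using M_prop by auto

lemma M_f: assumes "w \<in> Wsp" shows "M (f w) = w"
  by (rule W_unique[OF M_W assms]) (rule f_M)

lemma M_add: "M (x + y) i j = M x i j + M y i j"
proof -
  have e: "f (\<lambda>i j. M x i j + M y i j) = x + y" by (simp add: f_add f_M)
  have "M (x + y) = M (f (\<lambda>i j. M x i j + M y i j))" by (simp only: e)
  also have "\<dots> = (\<lambda>i j. M x i j + M y i j)" by (rule M_f[OF W_add[OF M_W M_W]])
  finally have "M (x + y) = (\<lambda>i j. M x i j + M y i j)" .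
  then show ?thesis by simp
qed

lemma M_scale: "M (t *\<^sub>R x) i j = t * M x i j"
proof -
  have e: "f (\<lambda>i j. t * M x i j) = t *\<^sub>R x" by (simp add: f_scale f_M)
  have "M (t *\<^sub>R x) = M (f (\<lambda>i j. t * M x i j))" by (simp only: e)
  also have "\<dots> = (\<lambda>i j. t * M x i j)" by (rule M_f[OF W_scale[OF M_W]])
  finally have "M (t *\<^sub>R x) = (\<lambda>i j. t * M x i j)" .
  then show ?thesis by simp
qed

lemma M_linear: "linear (\<lambda>x. M x i j)"
  by (rule linearI) (simp_all add: M_add M_scale)

definition a :: "nat \<Rightarrow> nat \<Rightarrow> real^'d" where
  "a i j = (\<chi> r. M (axis r 1) i j)"

lemma linear_inner_rep:
  fixes g :: "real^'d \<Rightarrow> real"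
  assumes "linear g"
  shows "g x = (\<chi> r. g (axis r 1)) \<bullet> x"
proof -
  have "g x = g (\<Sum>r\<in>UNIV. x$r *\<^sub>R axis r 1)"
    using basis_expansion[of x] by (simp add: scalar_mult_eq_scaleR)
  also have "\<dots> = (\<Sum>r\<in>UNIV. x$r * g (axis r 1))"
    using assms by (simp add: linear_sum linear_scale)
  also have "\<dots> = (\<chi> r. g (axis r 1)) \<bullet> x"
    by (simp add: inner_vec_def mult.commute)
  finally show ?thesis .
qed

lemma M_inner: "M x i j = a i j \<bullet> x"
  unfolding a_def by (rule linear_inner_rep[OF M_linear])

definition lam :: "real^'d \<Rightarrow> nat \<Rightarrow> nat \<Rightarrow> real" where
  "lam x = (\<lambda>i j. c i j + M (x - f c) i j)"

definition beta :: "nat \<Rightarrow> nat \<Rightarrow> real" where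
  "beta i j = c i j - a i j \<bullet> f c"

lemma lam_eq: "lam x i j = a i j \<bullet> x + beta i j"
  by (simp add: lam_def beta_def M_inner inner_diff_right)

lemma lam_f:
  assumes "(\<lambda>i j. q i j - c i j) \<in> Wsp"
  shows "lam (f q) = q"
proof -
  have "M (f q - f c) = M (f (\<lambda>i j. q i j - c i j))" by (simp only: f_diff)
  also have "\<dots> = (\<lambda>i j. q i j - c i j)" by (rule M_f[OF assms])
  finally have "M (f q - f c) = (\<lambda>i j. q i j - c i j)" .
  then show ?thesis unfolding lam_def by (auto simp: fun_eq_iff)
qed

lemma lam_fS: "q \<in> S \<Longrightarrow> lam (f q) = q"
  using lam_f S_diff_W c_S by blast

lemma f_lam: "f (lam x) = x"
proof -
  have "f (lam x) = f c + f (M (x - f c))" unfolding lam_def by (rule f_add)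
  then show ?thesis using f_M by simp
qed

lemma lam_out: "k \<le> i \<or> n i < j \<Longrightarrow> lam x i j = 0"
  using M_W[of "x - f c"] by (auto simp: lam_def c_def Wsp_def)

lemma lam_sum: "i < k \<Longrightarrow> (\<Sum>j\<le>n i. lam x i j) = 1"
  using M_W[of "x - f c"] memS_D(3)[OF c_S] by (simp add: lam_def Wsp_def sum.distrib)

lemma P_char: "x \<in> P \<longleftrightarrow> (\<forall>i<k. \<forall>j\<le>n i. lam x i j \<ge> 0)"
proof
  assume "x \<in> P"
  then obtain p where "p \<in> S" "x = f p" by blast
  then have "lam x = p" using lam_fS by simp
  then show "\<forall>i<k. \<forall>j\<le>n i. lam x i j \<ge> 0" using memS_D(2)[OF \<open>p \<in> S\<close>] by simp
next
  assume "\<forall>i<k. \<forall>j\<le>n i. lam x i j \<ge> 0"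
  then have "lam x \<in> S" using lam_out lam_sum by (intro memS_I) auto
  then have "f (lam x) \<in> P" by (rule imageI)
  then show "x \<in> P" by (simp only: f_lam)
qed

lemma lam_S: assumes "x \<in> P" shows "lam x \<in> S"
proof -
  obtain q where "q \<in> S" "x = f q" using assms by blast
  then show ?thesis by (simp add: lam_fS)
qed

lemma a_sum: "(\<Sum>j\<le>n i. a i j) = 0"
proof -
  have "(\<Sum>j\<le>n i. a i j) \<bullet> x = 0" for x
  proof -
    have "(\<Sum>j\<le>n i. a i j) \<bullet> x = (\<Sum>j\<le>n i. M x i j)" by (simp add: inner_sum_left M_inner)
    also have "\<dots> = 0"
    proof (cases "i < k")
      case True then show ?thesis using M_W[of x] by (simp add: Wsp_def)
    next
      case False then show ?thesis using M_W[of x] by (simp add: Wsp_def)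
    qed
    finally show ?thesis .
  qed
  from this[of "\<Sum>j\<le>n i. a i j"] show ?thesis by simp
qed

lemma a_fW: "w \<in> Wsp \<Longrightarrow> a i j \<bullet> f w = w i j"
  by (simp add: M_inner[symmetric] M_f)

lemma lam_affine: "lam ((1 - u) *\<^sub>R y + u *\<^sub>R z) i j = (1 - u) * lam y i j + u * lam z i j"
  unfolding lam_eq by (simp add: inner_add_right algebra_simps)

definition T :: "(nat \<Rightarrow> nat) set" where
  "T = PiE {..<k} (\<lambda>i. {..n i})"

definition e :: "(nat \<Rightarrow> nat) \<Rightarrow> nat \<Rightarrow> nat \<Rightarrow> real" where
  "e J = (\<lambda>i j. if i < k \<and> j = J i then 1 else 0)"

definition V0 :: "(nat \<Rightarrow> nat) \<Rightarrow> real^'d" where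
  "V0 J = f (e J)"

lemma T_le: "J \<in> T \<Longrightarrow> i < k \<Longrightarrow> J i \<le> n i"
  by (auto simp: T_def PiE_def Pi_def)

lemma finite_T: "finite T"
  unfolding T_def by (intro finite_PiE) auto

lemma e_S: assumes "J \<in> T" shows "e J \<in> S"
proof (rule memS_I)
  fix i j assume "k \<le> i \<or> n i < j"
  then show "e J i j = 0" using T_le[OF assms, of i] by (auto simp: e_def)
next
  fix i j show "0 \<le> e J i j" by (simp add: e_def)
next
  fix i assume i: "i < k"
  have "(\<Sum>j\<le>n i. e J i j) = (\<Sum>j\<le>n i. if j = J i then 1 else 0)"
    using i by (intro sum.cong) (auto simp: e_def)
  also have "\<dots> = 1" using T_le[OF assms i] by (simp add: sum.delta')
  finally show "(\<Sum>j\<le>n i. e J i j) = 1" .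
qed

lemma lam_V0: "J \<in> T \<Longrightarrow> lam (V0 J) = e J"
  unfolding V0_def by (rule lam_fS[OF e_S])

lemma V0_P: "J \<in> T \<Longrightarrow> V0 J \<in> P"
  unfolding V0_def using e_S by blast

lemma e_inj: assumes "J \<in> T" "J' \<in> T" "e J = e J'" shows "J = J'"
proof (rule PiE_ext)
  show "J \<in> PiE {..<k} (\<lambda>i. {..n i})" "J' \<in> PiE {..<k} (\<lambda>i. {..n i})" using assms unfolding T_def by auto
  fix i assume "i \<in> {..<k}"
  then have "e J i (J i) = 1" by (simp add: e_def)
  then have "e J' i (J i) = 1" using assms(3) by simp
  then show "J i = J' i" by (simp add: e_def split: if_splits)
qed

lemma V0_inj: "inj_on V0 T"
proof (rule inj_onI)
  fix J J' assume "J \<in> T" "J' \<in> T" "V0 J = V0 J'"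
  then have "e J = e J'" using lam_V0 by metis
  then show "J = J'" using e_inj \<open>J \<in> T\<close> \<open>J' \<in> T\<close> by blast
qed

lemma S_vertex:
  assumes p: "p \<in> S" and J: "J \<in> T" and z: "\<And>i j. i < k \<Longrightarrow> j \<le> n i \<Longrightarrow> j \<noteq> J i \<Longrightarrow> p i j = 0"
  shows "p = e J"
proof (intro ext)
  fix i j
  show "p i j = e J i j"
  proof (cases "i < k \<and> j \<le> n i")
    case True
    then have i: "i < k" and j: "j \<le> n i" by auto
    have "1 = (\<Sum>j\<le>n i. p i j)" using memS_D(3)[OF p i] by simp
    also have "\<dots> = (\<Sum>j'\<le>n i. if j' = J i then p i j' else 0)"
      using z i by (intro sum.cong) auto
    also have "\<dots> = p i (J i)" using T_le[OF J i] by (simp add: sum.delta')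
    finally have "p i (J i) = 1" by simp
    then show ?thesis using z[OF i j] i by (auto simp: e_def)
  next
    case False
    then have "p i j = 0" using memS_D(1)[OF p] by auto
    moreover have "e J i j = 0" using False T_le[OF J, of i] by (auto simp: e_def)
    ultimately show ?thesis by simp
  qed
qed

lemma V0_extreme: assumes J: "J \<in> T" shows "V0 J extreme_point_of P"
  unfolding extreme_point_of_def
proof (intro conjI ballI)
  show "V0 J \<in> P" by (rule V0_P[OF J])
  fix y z assume y: "y \<in> P" and z: "z \<in> P"
  show "V0 J \<notin> open_segment y z"
  proof
    assume "V0 J \<in> open_segment y z"
    then obtain u where yz: "y \<noteq> z" and u: "0 < u" "u < 1" and eq: "V0 J = (1 - u) *\<^sub>R y + u *\<^sub>R z"
      by (auto simp: in_segment)
    have ly: "lam y \<in> S" and lz: "lam z \<in> S" using lam_S y z by auto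
    have comb: "e J i j = (1 - u) * lam y i j + u * lam z i j" for i j
      using lam_affine[of u y z i j] lam_V0[OF J] eq by simp
    have zy: "lam y i j = 0" and zz: "lam z i j = 0" if "i < k" "j \<le> n i" "j \<noteq> J i" for i j
    proof -
      have "e J i j = 0" using that by (simp add: e_def)
      then have "(1 - u) * lam y i j + u * lam z i j = 0" using comb by simp
      moreover have "(1 - u) * lam y i j \<ge> 0" "u * lam z i j \<ge> 0"
        using u memS_D(2)[OF ly] memS_D(2)[OF lz] by auto
      ultimately have "(1 - u) * lam y i j = 0" "u * lam z i j = 0" by linarith+
      then show "lam y i j = 0" "lam z i j = 0" using u by auto
    qed
    have "lam y = e J" by (rule S_vertex[OF ly J zy])
    moreover have "lam z = e J" by (rule S_vertex[OF lz J zz])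
    ultimately have "lam y = lam z" by simp
    then have "f (lam y) = f (lam z)" by simp
    then have "y = z" by (simp only: f_lam)
    with yz show False by simp
  qed
qed

lemma extreme_V0:
  assumes x: "x extreme_point_of P"
  shows "x \<in> V0 ` T"
proof -
  have xP: "x \<in> P" using x by (simp add: extreme_point_of_def)
  define p where "p = lam x"
  have pS: "p \<in> S" unfolding p_def by (rule lam_S[OF xP])
  have xp: "x = f p" unfolding p_def by (simp only: f_lam)
  have row: "\<exists>j\<le>n i. \<forall>j'\<le>n i. j' \<noteq> j \<longrightarrow> p i j' = 0" if i: "i < k" for i
  proof (rule ccontr)
    assume H: "\<not> ?thesis"
    have "\<exists>j1\<le>n i. p i j1 > 0"
    proof (rule ccontr)
      assume "\<not> ?thesis"
      then have "\<forall>j\<le>n i. p i j = 0" using memS_D(2)[OF pS] by (meson not_less order.antisym)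
      then have "(\<Sum>j\<le>n i. p i j) = 0" by simp
      then show False using memS_D(3)[OF pS i] by simp
    qed
    then obtain j1 where j1: "j1 \<le> n i" "p i j1 > 0" by blast
    then obtain j2 where j2: "j2 \<le> n i" "j2 \<noteq> j1" "p i j2 \<noteq> 0" using H by blast
    then have j2p: "p i j2 > 0" using memS_D(2)[OF pS, of i j2] by simp
    define ep where "ep = min (p i j1) (p i j2)"
    have ep: "ep > 0" "ep \<le> p i j1" "ep \<le> p i j2" using j1 j2p by (auto simp: ep_def)
    define d where "d = (\<lambda>i' j'. (if i' = i \<and> j' = j1 then ep else 0) - (if i' = i \<and> j' = j2 then ep else 0))"
    define q1 where "q1 = (\<lambda>i' j'. p i' j' + d i' j')"
    define q2 where "q2 = (\<lambda>i' j'. p i' j' - d i' j')"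
    have dsum: "(\<Sum>j'\<le>n i'. d i' j') = 0" for i'
    proof (cases "i' = i")
      case True then show ?thesis using j1 j2 by (simp add: d_def sum_subtractf sum.delta')
    next
      case False then show ?thesis by (simp add: d_def)
    qed
    have dout: "d i' j' = 0" if "k \<le> i' \<or> n i' < j'" for i' j'
      using that i j1 j2 by (auto simp: d_def)
    have q1S: "q1 \<in> S"
    proof (rule memS_I)
      fix i' j' assume "k \<le> i' \<or> n i' < j'" then show "q1 i' j' = 0"
        using dout memS_D(1)[OF pS] by (simp add: q1_def)
    next
      fix i' j' show "0 \<le> q1 i' j'"
        using ep j2 memS_D(2)[OF pS, of i' j'] by (auto simp: q1_def d_def)
    next
      fix i' assume "i' < k" then show "(\<Sum>j\<le>n i'. q1 i' j) = 1"
        using memS_D(3)[OF pS] dsum by (simp add: q1_def sum.distrib)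
    qed
    have q2S: "q2 \<in> S"
    proof (rule memS_I)
      fix i' j' assume "k \<le> i' \<or> n i' < j'" then show "q2 i' j' = 0"
        using dout memS_D(1)[OF pS] by (simp add: q2_def)
    next
      fix i' j' show "0 \<le> q2 i' j'"
        using ep j2 memS_D(2)[OF pS, of i' j'] by (auto simp: q2_def d_def)
    next
      fix i' assume "i' < k" then show "(\<Sum>j\<le>n i'. q2 i' j) = 1"
        using memS_D(3)[OF pS] dsum by (simp add: q2_def sum_subtractf)
    qed
    have "q1 i j1 \<noteq> q2 i j1" using ep j2 by (simp add: q1_def q2_def d_def)
    then have "q1 \<noteq> q2" by metis
    then have ne: "f q1 \<noteq> f q2" using inj q1S q2S by (meson inj_onD)
    have "f q1 + f q2 = 2 *\<^sub>R f p"
    proof -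
      have "f q1 = f p + f d" unfolding q1_def by (rule f_add)
      moreover have "f q2 = f p - f d" unfolding q2_def by (rule f_diff)
      ultimately show ?thesis by (simp add: scaleR_2)
    qed
    then have "midpoint (f q1) (f q2) = x" using xp by (simp add: midpoint_def)
    then have "x \<in> open_segment (f q1) (f q2)" using ne midpoint_in_open_segment by metis
    moreover have "f q1 \<in> P" "f q2 \<in> P" using q1S q2S by auto
    ultimately show False using x by (auto simp: extreme_point_of_def)
  qed
  define J where "J = restrict (\<lambda>i. SOME j. j \<le> n i \<and> (\<forall>j'\<le>n i. j' \<noteq> j \<longrightarrow> p i j' = 0)) {..<k}"
  have Jp: "J i \<le> n i \<and> (\<forall>j'\<le>n i. j' \<noteq> J i \<longrightarrow> p i j' = 0)" if "i < k" for i
    using someI_ex[OF row[OF that]] that by (simp add: J_def)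
  have JT: "J \<in> T" using Jp by (auto simp: T_def J_def PiE_def Pi_def extensional_def)
  have "p = e J" using Jp by (intro S_vertex[OF pS JT]) auto
  then have "x = V0 J" using xp by (simp add: V0_def)
  then show ?thesis using JT by blast
qed

lemma vertices_P: "vertices P = V0 ` T"
  unfolding vertices_def using extreme_V0 V0_extreme by blast


definition Box :: "(nat \<times> nat) set" where
  "Box = Sigma {..<k} (\<lambda>i. {..n i})"

definition Idx1 :: "(nat \<times> nat) set" where
  "Idx1 = {F \<in> Box. 1 \<le> n (fst F)}"

definition lamF :: "real^'d \<Rightarrow> nat \<times> nat \<Rightarrow> real" where
  "lamF x F = lam x (fst F) (snd F)"

definition aF :: "nat \<times> nat \<Rightarrow> real^'d" where
  "aF F = a (fst F) (snd F)"

definition betaF :: "nat \<times> nat \<Rightarrow> real" where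
  "betaF F = beta (fst F) (snd F)"

lemma lamF_eq: "lamF x F = aF F \<bullet> x + betaF F"
  by (simp add: lamF_def aF_def betaF_def lam_eq)

lemma finite_Box: "finite Box" unfolding Box_def by auto
lemma finite_Idx1: "finite Idx1" using finite_Box unfolding Idx1_def by auto

lemma P_charF: "x \<in> P \<longleftrightarrow> (\<forall>F\<in>Box. lamF x F \<ge> 0)"
  unfolding P_char Box_def lamF_def by auto

lemma P_charF1: "x \<in> P \<longleftrightarrow> (\<forall>F\<in>Idx1. lamF x F \<ge> 0)"
proof -
  have "lamF x F \<ge> 0" if "F \<in> Box" "n (fst F) = 0" for F
  proof -
    obtain i j where F: "F = (i, j)" by (cases F)
    have "i < k" "j = 0" using that F by (auto simp: Box_def)
    then show ?thesis using lam_sum[of i x] that F by (simp add: lamF_def)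
  qed
  then show ?thesis unfolding P_charF Idx1_def by (auto simp: not_less_eq_eq) (metis not_less_eq_eq le_zero_eq)
qed

definition wit :: "nat \<times> nat \<Rightarrow> nat \<Rightarrow> nat \<Rightarrow> real" where
  "wit F = (\<lambda>i' j'. if i' = fst F \<and> j' \<le> n (fst F)
     then (if j' = (if snd F = 0 then 1 else 0) then 2 else 0) + (if j' = snd F then -1 else 0)
     else (if i' < k \<and> j' = 0 then 1 else 0))"

lemma wit_prop:
  assumes F: "F \<in> Idx1"
  shows "lamF (f (wit F)) F < 0" and "\<And>G. G \<in> Box \<Longrightarrow> G \<noteq> F \<Longrightarrow> lamF (f (wit F)) G \<ge> 0"
proof -
  obtain i j where Fij: "F = (i, j)" by (cases F)
  have i: "i < k" and j: "j \<le> n i" and ni: "1 \<le> n i" using F Fij by (auto simp: Idx1_def Box_def)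
  define jj where "jj = (if j = 0 then 1 else (0::nat))"
  have jj: "jj \<le> n i" "jj \<noteq> j" using ni by (auto simp: jj_def)
  have W: "(\<lambda>i' j'. wit F i' j' - c i' j') \<in> Wsp"
  proof -
    have "(\<Sum>j'\<le>n i'. wit F i' j') = 1" if "i' < k" for i'
    proof (cases "i' = i")
      case True
      have "(\<Sum>j'\<le>n i'. wit F i' j') = (\<Sum>j'\<le>n i. (if j' = jj then 2 else 0) + (if j' = j then -1 else 0))"
        using True Fij by (intro sum.cong) (auto simp: wit_def jj_def)
      also have "\<dots> = 1" using jj j by (simp add: sum.distrib sum.delta')
      finally show ?thesis .
    next
      case False
      have "(\<Sum>j'\<le>n i'. wit F i' j') = (\<Sum>j'\<le>n i'. if j' = 0 then 1 else 0)"
        using False Fij that by (intro sum.cong) (auto simp: wit_def)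
      also have "\<dots> = 1" by (simp add: sum.delta')
      finally show ?thesis .
    qed
    moreover have "wit F i' j' = 0" if "k \<le> i' \<or> n i' < j'" for i' j'
      using that Fij i by (auto simp: wit_def)
    ultimately show ?thesis using memS_D[OF c_S] by (auto simp: Wsp_def sum_subtractf)
  qed
  have L: "lam (f (wit F)) = wit F" by (rule lam_f[OF W])
  show "lamF (f (wit F)) F < 0" using L Fij j jj by (simp add: lamF_def wit_def)
  fix G assume G: "G \<in> Box" "G \<noteq> F"
  obtain i' j' where Gij: "G = (i', j')" by (cases G)
  show "lamF (f (wit F)) G \<ge> 0" using L Fij Gij G jj by (auto simp: lamF_def wit_def)
qed

lemma aF_nz: assumes "F \<in> Idx1" shows "aF F \<noteq> 0"
proof
  assume "aF F = 0"
  then have "lamF (f (wit F)) F = lamF (f c) F" by (simp add: lamF_eq)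
  moreover have "lamF (f c) F > 0"
    using assms lam_fS[OF c_S] c_pos by (auto simp: lamF_def Idx1_def Box_def)
  ultimately show False using wit_prop(1)[OF assms] by simp
qed

definition Hs :: "nat \<times> nat \<Rightarrow> (real^'d) set" where
  "Hs F = {x. (- aF F) \<bullet> x \<le> betaF F}"

lemma Hs_iff: "x \<in> Hs F \<longleftrightarrow> lamF x F \<ge> 0"
  by (simp add: Hs_def lamF_eq) linarith

lemma wit_Hs: assumes "F \<in> Idx1" shows "f (wit F) \<notin> Hs F" and "\<And>G. G \<in> Idx1 \<Longrightarrow> G \<noteq> F \<Longrightarrow> f (wit F) \<in> Hs G"
  using wit_prop[OF assms] by (auto simp: Hs_iff Idx1_def)

lemma Hs_inj: "inj_on Hs Idx1"
  by (rule inj_onI) (metis wit_Hs)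

lemma P_Hs: "P = \<Inter> (Hs ` Idx1)"
proof (rule set_eqI)
  fix x show "x \<in> P \<longleftrightarrow> x \<in> \<Inter> (Hs ` Idx1)" unfolding P_charF1 by (simp add: Hs_iff)
qed

lemma aff_hull_P: "affine hull P = UNIV"
  using aff_dim_eq_full[of P] dimP by simp

definition Cf :: "nat \<times> nat \<Rightarrow> (real^'d) set" where
  "Cf F = P \<inter> {x. lamF x F = 0}"

lemma facet_char: "C facet_of P \<longleftrightarrow> (\<exists>F\<in>Idx1. C = Cf F)"
proof -
  define ah where "ah h = - aF (inv_into Idx1 Hs h)" for h
  define bh where "bh h = betaF (inv_into Idx1 Hs h)" for h
  have fin: "finite (Hs ` Idx1)" using finite_Idx1 by simp
  have seq: "P = affine hull P \<inter> \<Inter> (Hs ` Idx1)" using aff_hull_P P_Hs by simp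
  have faceq: "ah h \<noteq> 0 \<and> h = {x. ah h \<bullet> x \<le> bh h}" if hH: "h \<in> Hs ` Idx1" for h
  proof -
    obtain F where F: "F \<in> Idx1" "h = Hs F" using hH by blast
    have "inv_into Idx1 Hs h = F" using F Hs_inj by (simp add: inv_into_f_f)
    then show ?thesis using F aF_nz by (simp add: ah_def bh_def Hs_def)
  qed
  have psub: "P \<subset> affine hull P \<inter> \<Inter> F'" if sub: "F' \<subset> Hs ` Idx1" for F'
  proof -
    obtain h where h: "h \<in> Hs ` Idx1" "h \<notin> F'" using sub by blast
    then obtain F where F: "F \<in> Idx1" "h = Hs F" by blast
    have "f (wit F) \<in> \<Inter> F'"
    proof
      fix h' assume "h' \<in> F'"
      then obtain G where G: "G \<in> Idx1" "h' = Hs G" using sub by blast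
      then have "G \<noteq> F" using h F \<open>h' \<in> F'\<close> by metis
      then show "f (wit F) \<in> h'" using wit_Hs(2)[OF F(1) G(1)] G by simp
    qed
    moreover have "f (wit F) \<notin> P" using wit_Hs(1)[OF F(1)] P_Hs F by blast
    moreover have "P \<subseteq> \<Inter> F'" using P_Hs sub by blast
    ultimately show ?thesis using aff_hull_P by blast
  qed
  have "C facet_of P \<longleftrightarrow> (\<exists>h. h \<in> Hs ` Idx1 \<and> C = P \<inter> {x. ah h \<bullet> x = bh h})"
    by (rule facet_of_polyhedron_explicit[OF fin seq faceq psub])
  also have "\<dots> \<longleftrightarrow> (\<exists>F\<in>Idx1. C = Cf F)"
  proof -
    have "{x. ah (Hs F) \<bullet> x = bh (Hs F)} = {x. lamF x F = 0}" if "F \<in> Idx1" for F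
    proof -
      have "inv_into Idx1 Hs (Hs F) = F" using that Hs_inj by (simp add: inv_into_f_f)
      then show ?thesis by (auto simp: ah_def bh_def lamF_eq)
    qed
    then show ?thesis unfolding Cf_def by auto
  qed
  finally show ?thesis .
qed


definition AJ :: "(nat \<Rightarrow> nat) \<Rightarrow> (nat \<times> nat) set" where
  "AJ J = {F \<in> Box. snd F \<noteq> J (fst F)}"

lemma AJ_Idx1: assumes "J \<in> T" shows "AJ J \<subseteq> Idx1"
proof
  fix F assume F: "F \<in> AJ J"
  obtain i j where Fij: "F = (i, j)" by (cases F)
  have "i < k" "j \<le> n i" "j \<noteq> J i" using F Fij by (auto simp: AJ_def Box_def)
  moreover have "J i \<le> n i" using T_le[OF assms \<open>i < k\<close>] .
  ultimately have "1 \<le> n i" by linarith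
  then show "F \<in> Idx1" using F Fij by (auto simp: AJ_def Idx1_def)
qed

lemma lamF_V0: "J \<in> T \<Longrightarrow> F \<in> Box \<Longrightarrow> lamF (V0 J) F = (if snd F = J (fst F) then 1 else 0)"
  by (auto simp: lamF_def lam_V0 e_def Box_def)

lemma V0_Cf: "J \<in> T \<Longrightarrow> F \<in> Box \<Longrightarrow> V0 J \<in> Cf F \<longleftrightarrow> snd F \<noteq> J (fst F)"
  using lamF_V0 V0_P by (auto simp: Cf_def)

lemma Cf_inj: "inj_on Cf Idx1"
proof (rule inj_onI, rule ccontr)
  fix F G assume F: "F \<in> Idx1" and G: "G \<in> Idx1" and eq: "Cf F = Cf G" and ne: "F \<noteq> G"
  obtain i j where Fij: "F = (i, j)" by (cases F)
  obtain i' j' where Gij: "G = (i', j')" by (cases G)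
  have i: "i < k" "j \<le> n i" "1 \<le> n i" using F Fij by (auto simp: Idx1_def Box_def)
  have i': "i' < k" "j' \<le> n i'" using G Gij by (auto simp: Idx1_def Box_def)
  define J where "J = restrict (\<lambda>l. if l = i' then j' else if l = i then (if j = 0 then 1 else 0) else 0) {..<k}"
  have JT: "J \<in> T" using i i' by (auto simp: J_def T_def PiE_def Pi_def extensional_def)
  have "J i \<noteq> j" using i ne Fij Gij by (auto simp: J_def)
  then have "V0 J \<in> Cf F" using V0_Cf[OF JT] F Fij by (auto simp: Idx1_def)
  moreover have "J i' = j'" using i' by (simp add: J_def)
  then have "V0 J \<notin> Cf G" using V0_Cf[OF JT] G Gij by (auto simp: Idx1_def)
  ultimately show False using eq by simp
qed

lemma facets_at_V0: assumes J: "J \<in> T" shows "facets_at P (V0 J) = Cf ` AJ J"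
proof -
  have "facets_at P (V0 J) = {C. \<exists>F\<in>Idx1. C = Cf F \<and> V0 J \<in> Cf F}"
    unfolding facets_at_def facet_char by blast
  also have "\<dots> = Cf ` AJ J"
  proof -
    have "F \<in> Idx1 \<and> V0 J \<in> Cf F \<longleftrightarrow> F \<in> AJ J" for F
      using V0_Cf[OF J, of F] AJ_Idx1[OF J] by (auto simp: AJ_def Idx1_def)
    then show ?thesis by blast
  qed
  finally show ?thesis .
qed

definition zF :: "nat \<times> nat \<Rightarrow> nat \<Rightarrow> nat \<Rightarrow> real" where
  "zF F = (\<lambda>i' j'. if i' = fst F \<and> j' \<le> n (fst F)
     then 1 / real (n (fst F)) - (if j' = snd F then 1 / real (n (fst F)) else 0)
     else c i' j')"

lemma zF_prop:
  assumes F: "F \<in> Idx1"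
  shows "lamF (f (zF F)) F = 0" and "\<And>G. G \<in> Box \<Longrightarrow> G \<noteq> F \<Longrightarrow> lamF (f (zF F)) G > 0"
proof -
  obtain i j where Fij: "F = (i, j)" by (cases F)
  have i: "i < k" and j: "j \<le> n i" and ni: "1 \<le> n i" using F Fij by (auto simp: Idx1_def Box_def)
  have W: "(\<lambda>i' j'. zF F i' j' - c i' j') \<in> Wsp"
  proof -
    have "(\<Sum>j'\<le>n i'. zF F i' j') = 1" if "i' < k" for i'
    proof (cases "i' = i")
      case True
      have "(\<Sum>j'\<le>n i'. zF F i' j') = (\<Sum>j'\<le>n i. 1 / real (n i) - (if j' = j then 1 / real (n i) else 0))"
        using True Fij by (intro sum.cong) (auto simp: zF_def)
      also have "\<dots> = (real (n i) + 1) / real (n i) - 1 / real (n i)" using j by (simp add: sum_subtractf sum.delta')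
      also have "\<dots> = 1" using ni by (simp add: field_simps)
      finally show ?thesis .
    next
      case False
      have "(\<Sum>j'\<le>n i'. zF F i' j') = (\<Sum>j'\<le>n i'. c i' j')"
        using False Fij that by (intro sum.cong) (auto simp: zF_def)
      also have "\<dots> = 1" using memS_D(3)[OF c_S that] .
      finally show ?thesis .
    qed
    moreover have "zF F i' j' = c i' j'" if "k \<le> i' \<or> n i' < j'" for i' j'
      using that Fij i by (auto simp: zF_def)
    ultimately show ?thesis using memS_D[OF c_S] by (auto simp: Wsp_def sum_subtractf)
  qed
  have L: "lam (f (zF F)) = zF F" by (rule lam_f[OF W])
  show "lamF (f (zF F)) F = 0" using L Fij j by (simp add: lamF_def zF_def)
  fix G assume G: "G \<in> Box" "G \<noteq> F"
  obtain i' j' where Gij: "G = (i', j')" by (cases G)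
  have "i' < k" "j' \<le> n i'" using G Gij by (auto simp: Box_def)
  then show "lamF (f (zF F)) G > 0" using L Fij Gij G ni c_pos by (auto simp: lamF_def zF_def)
qed

lemma outward_normal_Cf:
  assumes F: "F \<in> Idx1"
  shows "outward_normal P (Cf F) = - (1 / norm (aF F)) *\<^sub>R aF F"
proof -
  define A where "A = aF F"
  have A0: "A \<noteq> 0" using aF_nz[OF F] by (simp add: A_def)
  then have nA: "norm A > 0" by simp
  have AA: "A \<bullet> A > 0" using A0 by simp
  define z where "z = f (zF F)"
  have FB: "F \<in> Box" using F by (simp add: Idx1_def)
  define Os where "Os = (\<Inter>G\<in>Box - {F}. {y. aF G \<bullet> y > - betaF G})"
  have "open Os" unfolding Os_def using finite_Box by (intro open_INT) (auto intro: open_halfspace_gt)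
  moreover have "z \<in> Os" unfolding Os_def
  proof (rule INT_I)
    fix G assume "G \<in> Box - {F}"
    then have "lamF z G > 0" using zF_prop(2)[OF F] by (simp add: z_def)
    then show "z \<in> {y. aF G \<bullet> y > - betaF G}" by (simp add: lamF_eq)
  qed
  ultimately obtain ep where ep: "ep > 0" "ball z ep \<subseteq> Os" using open_contains_ball by blast
  have inP: "y \<in> P" if "y \<in> ball z ep" "lamF y F \<ge> 0" for y
  proof -
    have "lamF y G \<ge> 0" if "G \<in> Box" for G
    proof (cases "G = F")
      case True then show ?thesis using \<open>lamF y F \<ge> 0\<close> by simp
    next
      case False
      have "y \<in> Os" using \<open>y \<in> ball z ep\<close> ep(2) by blast
      then have "y \<in> {y. aF G \<bullet> y > - betaF G}" using False that unfolding Os_def by blast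
      then show ?thesis by (simp add: lamF_eq)
    qed
    then show ?thesis using P_charF by blast
  qed
  have lz: "lamF z F = 0" using zF_prop(1)[OF F] by (simp add: z_def)
  have zC: "z \<in> Cf F" using inP[of z] ep lz by (simp add: Cf_def)
  define u0 where "u0 = - (1 / norm A) *\<^sub>R A"
  let ?Q = "\<lambda>u. norm u = 1 \<and> (\<exists>h. P \<subseteq> {y. u \<bullet> y \<le> h} \<and> Cf F \<subseteq> {y. u \<bullet> y = h})"
  have "?Q u0"
  proof (intro conjI exI)
    show "norm u0 = 1" using nA by (simp add: u0_def)
    show "P \<subseteq> {y. u0 \<bullet> y \<le> betaF F / norm A}"
    proof
      fix y assume "y \<in> P"
      then have "lamF y F \<ge> 0" using P_charF FB by blast
      then have "- (A \<bullet> y) \<le> betaF F" by (simp add: lamF_eq A_def)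
      then have "- (A \<bullet> y) / norm A \<le> betaF F / norm A" using divide_right_mono[of "- (A \<bullet> y)" "betaF F" "norm A"] nA by simp
      then show "y \<in> {y. u0 \<bullet> y \<le> betaF F / norm A}" by (simp add: u0_def)
    qed
    show "Cf F \<subseteq> {y. u0 \<bullet> y = betaF F / norm A}"
    proof
      fix y assume "y \<in> Cf F"
      then have "- (A \<bullet> y) = betaF F" by (simp add: Cf_def lamF_eq A_def)
      then have "- (A \<bullet> y) / norm A = betaF F / norm A" by simp
      then show "y \<in> {y. u0 \<bullet> y = betaF F / norm A}" by (simp add: u0_def)
    qed
  qed
  moreover have "u = u0" if Qu: "?Q u" for u
  proof -
    obtain h where nu: "norm u = 1" and hP: "P \<subseteq> {y. u \<bullet> y \<le> h}" and hC: "Cf F \<subseteq> {y. u \<bullet> y = h}"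
      using Qu by blast
    have uz: "u \<bullet> z = h" using hC zC by blast
    define s where "s = (u \<bullet> A) / (A \<bullet> A)"
    define w where "w = u - s *\<^sub>R A"
    have Aw: "A \<bullet> w = 0" using AA by (simp add: w_def s_def inner_diff_right inner_commute)
    define t where "t = ep / (2 * (norm w + 1))"
    have t0: "t > 0" unfolding t_def using ep by (intro divide_pos_pos) (auto simp: add_nonneg_pos)
    have tw: "t * norm w < ep"
    proof -
      have "t * norm w = ep * (norm w / (2 * (norm w + 1)))" by (simp add: t_def)
      also have "\<dots> < ep * 1" using ep half_lt[of "norm w"] by (intro mult_strict_left_mono) auto
      finally show ?thesis by simp
    qed
    have onC: "z + r *\<^sub>R w \<in> Cf F" if "r = t \<or> r = - t" for r
    proof -
      have "dist z (z + r *\<^sub>R w) = \<bar>r\<bar> * norm w" by (simp add: dist_norm)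
      also have "\<dots> = t * norm w" using that t0 by auto
      finally have "z + r *\<^sub>R w \<in> ball z ep" using tw by simp
      moreover have "lamF (z + r *\<^sub>R w) F = 0" using lz Aw
        by (simp add: lamF_eq inner_add_right A_def)
      ultimately show ?thesis using inP by (simp add: Cf_def)
    qed
    have "u \<bullet> (z + t *\<^sub>R w) = h" using hC onC[of t] by blast
    then have "t * (u \<bullet> w) = 0" using uz by (simp add: inner_add_right)
    then have uw: "u \<bullet> w = 0" using t0 by simp
    have "w \<bullet> w = u \<bullet> w - s * (A \<bullet> w)" by (simp add: w_def inner_diff_left inner_commute)
    then have "w \<bullet> w = 0" using uw Aw by simp
    then have w0: "w = 0" by simp
    then have us: "u = s *\<^sub>R A" by (simp add: w_def)
    define t' where "t' = ep / (2 * (norm A + 1))"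
    have t'0: "t' > 0" unfolding t'_def using ep by (intro divide_pos_pos) (auto simp: add_nonneg_pos)
    have "t' * norm A < ep"
    proof -
      have "t' * norm A = ep * (norm A / (2 * (norm A + 1)))" by (simp add: t'_def)
      also have "\<dots> < ep * 1" using ep half_lt[of "norm A"] by (intro mult_strict_left_mono) auto
      finally show ?thesis by simp
    qed
    then have "z + t' *\<^sub>R A \<in> ball z ep" using t'0 by (simp add: dist_norm)
    moreover have "lamF (z + t' *\<^sub>R A) F = t' * (A \<bullet> A)" using lz
      by (simp add: lamF_eq inner_add_right A_def)
    ultimately have "z + t' *\<^sub>R A \<in> P" using inP t'0 AA by simp
    then have "u \<bullet> (z + t' *\<^sub>R A) \<le> h" using hP by blast
    then have "t' * (u \<bullet> A) \<le> 0" using uz by (simp add: inner_add_right)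
    then have "u \<bullet> A \<le> 0" using t'0 by (simp add: mult_le_0_iff)
    then have s0: "s \<le> 0" using AA by (simp add: s_def divide_nonpos_pos)
    have "\<bar>s\<bar> * norm A = 1" using nu us by simp
    then have "s = - 1 / norm A" using s0 nA by (simp add: field_simps abs_if split: if_splits)
    then show "u = u0" using us by (simp add: u0_def)
  qed
  ultimately have "(THE u. ?Q u) = u0" by (rule the_equality)
  then show ?thesis unfolding outward_normal_def u0_def A_def by simp
qed

lemma normal_dot:
  assumes F: "F \<in> Idx1" and v: "v \<in> Cf F"
  shows "(v - y) \<bullet> outward_normal P (Cf F) = lamF y F / norm (aF F)"
proof -
  have "lamF v F = 0" using v by (simp add: Cf_def)
  then have "aF F \<bullet> v = - betaF F" by (simp add: lamF_eq)
  then show ?thesis using outward_normal_Cf[OF F]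
    by (simp add: inner_diff_left lamF_eq inner_commute) (cases "norm (aF F) = 0"; simp add: field_simps)
qed


lemma finite_AJ: "finite (AJ J)"
  using finite_Box by (simp add: AJ_def)

definition wG :: "(nat \<Rightarrow> nat) \<Rightarrow> nat \<times> nat \<Rightarrow> nat \<Rightarrow> nat \<Rightarrow> real" where
  "wG J G = (\<lambda>i' j'. (if i' = fst G \<and> j' = snd G then 1 else 0) - (if i' = fst G \<and> j' = J (fst G) then 1 else 0))"

lemma wG_W: assumes J: "J \<in> T" and G: "G \<in> AJ J" shows "wG J G \<in> Wsp"
proof -
  obtain i l where Gil: "G = (i, l)" by (cases G)
  have i: "i < k" "l \<le> n i" "l \<noteq> J i" using G Gil by (auto simp: AJ_def Box_def)
  have Ji: "J i \<le> n i" using T_le[OF J i(1)] .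
  show ?thesis unfolding Wsp_def
  proof (intro CollectI conjI allI impI)
    fix i' j' assume "k \<le> i' \<or> n i' < j'"
    then show "wG J G i' j' = 0" using i Ji Gil by (auto simp: wG_def)
  next
    fix i' assume "i' < k"
    show "(\<Sum>j\<le>n i'. wG J G i' j) = 0"
    proof (cases "i' = i")
      case True then show ?thesis using i Ji Gil by (simp add: wG_def sum_subtractf sum.delta')
    next
      case False then show ?thesis using Gil by (simp add: wG_def)
    qed
  qed
qed

lemma aF_wG: assumes J: "J \<in> T" and G: "G \<in> AJ J" and F: "F \<in> AJ J"
  shows "aF F \<bullet> f (wG J G) = (if F = G then 1 else 0)"
proof -
  have "aF F \<bullet> f (wG J G) = wG J G (fst F) (snd F)"
    unfolding aF_def by (rule a_fW[OF wG_W[OF J G]])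
  also have "\<dots> = (if F = G then 1 else 0)" using F by (auto simp: wG_def AJ_def prod_eq_iff)
  finally show ?thesis .
qed

lemma aF_inj: assumes J: "J \<in> T" shows "inj_on aF (AJ J)"
proof (rule inj_onI)
  fix F F' assume F: "F \<in> AJ J" and F': "F' \<in> AJ J" and e: "aF F = aF F'"
  have "aF F \<bullet> f (wG J F) = 1" using aF_wG[OF J F F] by simp
  then have "aF F' \<bullet> f (wG J F) = 1" using e by simp
  then show "F = F'" using aF_wG[OF J F F'] by (simp split: if_splits)
qed

lemma aF_indep: assumes J: "J \<in> T" shows "independent (aF ` AJ J)"
  unfolding independent_explicit
proof (intro conjI allI impI ballI)
  show "finite (aF ` AJ J)" using finite_AJ by simp
  fix u assume H: "(\<Sum>v\<in>aF ` AJ J. u v *\<^sub>R v) = 0"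
  fix v assume "v \<in> aF ` AJ J"
  then obtain G where G: "G \<in> AJ J" "v = aF G" by blast
  have "(\<Sum>v\<in>aF ` AJ J. u v *\<^sub>R v) = (\<Sum>F\<in>AJ J. u (aF F) *\<^sub>R aF F)"
    by (rule sum.reindex[OF aF_inj[OF J], unfolded comp_def])
  then have "0 = (\<Sum>F\<in>AJ J. u (aF F) *\<^sub>R aF F) \<bullet> f (wG J G)" using H by simp
  also have "\<dots> = (\<Sum>F\<in>AJ J. u (aF F) * (if F = G then 1 else 0))"
    using aF_wG[OF J G(1)] by (simp add: inner_sum_left)
  also have "\<dots> = u (aF G)" using G finite_AJ by (simp add: if_distrib cong: if_cong)
  finally show "u v = 0" using G by simp
qed

lemma annihilate:
  assumes J: "J \<in> T" and H: "\<And>F. F \<in> AJ J \<Longrightarrow> aF F \<bullet> x = 0"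
  shows "x = 0"
proof -
  have box: "M x i j = 0" if "i < k" "j \<le> n i" for i j
  proof (cases "j = J i")
    case False
    then have "(i, j) \<in> AJ J" using that by (simp add: AJ_def Box_def)
    then show ?thesis using H[of "(i, j)"] by (simp add: M_inner aF_def)
  next
    case True
    have Ji: "J i \<le> n i" using T_le[OF J that(1)] .
    have "0 = (\<Sum>j\<le>n i. M x i j)" using M_W[of x] that(1) by (simp add: Wsp_def)
    also have "\<dots> = M x i (J i) + (\<Sum>j\<in>{..n i} - {J i}. M x i j)"
      using Ji by (simp add: sum.remove)
    also have "(\<Sum>j\<in>{..n i} - {J i}. M x i j) = 0"
    proof (rule sum.neutral, rule ballI)
      fix j' assume "j' \<in> {..n i} - {J i}"
      then have "(i, j') \<in> AJ J" using that by (auto simp: AJ_def Box_def)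
      then show "M x i j' = 0" using H[of "(i, j')"] by (simp add: M_inner aF_def)
    qed
    finally show ?thesis using True by simp
  qed
  have "M x = (\<lambda>i j. 0)"
  proof (intro ext)
    fix i j show "M x i j = 0"
    proof (cases "i < k \<and> j \<le> n i")
      case True then show ?thesis using box by auto
    next
      case False then show ?thesis using M_W[of x] by (auto simp: Wsp_def)
    qed
  qed
  then have "x = f (\<lambda>i j. 0)" using f_M[of x] by simp
  then show ?thesis by (simp add: f_zero)
qed

lemma card_AJ: assumes J: "J \<in> T" shows "card (AJ J) = CARD('d)"
proof -
  have cB: "card (aF ` AJ J) = card (AJ J)" by (rule card_image[OF aF_inj[OF J]])
  have "card (aF ` AJ J) \<le> DIM(real^'d)" using independent_bound[OF aF_indep[OF J]] by simp
  then have le: "card (AJ J) \<le> CARD('d)" using cB by simp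
  have "\<not> card (AJ J) < CARD('d)"
  proof
    assume lt: "card (AJ J) < CARD('d)"
    have "dim (aF ` AJ J) \<le> card (aF ` AJ J)"
      using finite_AJ by (intro dim_le_card) (auto intro: span_base)
    then have "dim (aF ` AJ J) < DIM(real^'d)" using lt cB by simp
    then obtain x :: "real^'d" where x: "x \<noteq> 0" "span (aF ` AJ J) \<subseteq> {y. x \<bullet> y = 0}"
      using lowdim_subset_hyperplane by blast
    have "aF F \<bullet> x = 0" if "F \<in> AJ J" for F
      using x(2) span_base[of "aF F" "aF ` AJ J"] that by (auto simp: inner_commute)
    then have "x = 0" by (rule annihilate[OF J])
    with x(1) show False by simp
  qed
  with le show ?thesis by simp
qed


definition Rm :: "('d \<Rightarrow> nat \<times> nat) \<Rightarrow> real^'d^'d" where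
  "Rm h = (\<chi> r. aF (h r))"

lemma det_bij_indep:
  assumes h1: "bij_betw h1 (UNIV::'d set) A" and h2: "bij_betw h2 (UNIV::'d set) A"
  shows "\<bar>det (Rm h1)\<bar> = \<bar>det (Rm h2)\<bar>"
proof -
  define p where "p = (\<lambda>r. inv_into UNIV h1 (h2 r))"
  have "bij_betw (inv_into UNIV h1) A UNIV" using h1 by (rule bij_betw_inv_into)
  then have "bij_betw p UNIV UNIV" unfolding p_def using bij_betw_trans[OF h2] by (simp add: comp_def)
  then have pp: "p permutes (UNIV::'d set)" by (rule bij_imp_permutes) simp
  have hp: "h1 (p r) = h2 r" for r
  proof -
    have "h2 r \<in> range h1" using h1 h2 by (auto simp: bij_betw_def)
    then show ?thesis unfolding p_def by (rule f_inv_into_f)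
  qed
  have "Rm h2 = (\<chi> r. Rm h1 $ p r)" by (simp add: Rm_def hp)
  then have "det (Rm h2) = of_int (sign p) * det (Rm h1)" using det_permute_rows[OF pp] by simp
  then show ?thesis by (simp add: sign_def abs_mult)
qed

lemma ex_bij: assumes J: "J \<in> T" shows "\<exists>h. bij_betw h (UNIV::'d set) (AJ J)"
  using bij_betw_iff_card[of "UNIV::'d set" "AJ J"] card_AJ[OF J] finite_AJ by simp

lemma det_step:
  assumes J: "J \<in> T" and i: "i < k" and Ji: "J i \<noteq> 0" and h: "bij_betw h (UNIV::'d set) (AJ J)"
  shows "\<exists>h'. bij_betw h' (UNIV::'d set) (AJ (J(i := 0))) \<and> \<bar>det (Rm h')\<bar> = \<bar>det (Rm h)\<bar>"
proof -
  define m where "m = J i"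
  have m: "1 \<le> m" "m \<le> n i" using Ji T_le[OF J i] by (auto simp: m_def)
  have i0: "(i, 0) \<in> AJ J" using i Ji by (simp add: AJ_def Box_def)
  have imn: "(i, m) \<notin> AJ J" by (simp add: AJ_def m_def)
  define r0 where "r0 = inv_into UNIV h (i, 0)"
  have hr0: "h r0 = (i, 0)" using h i0 unfolding r0_def by (auto simp: bij_betw_def f_inv_into_f)
  have hinj: "inj h" using h by (simp add: bij_betw_def)
  have him: "h ` UNIV = AJ J" using h by (simp add: bij_betw_def)
  define h' where "h' = h(r0 := (i, m))"
  have AJ': "AJ (J(i := 0)) = (AJ J - {(i, 0)}) \<union> {(i, m)}"
    using i m Ji by (auto simp: AJ_def Box_def m_def)
  have bij': "bij_betw h' UNIV (AJ (J(i := 0)))"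
    unfolding bij_betw_def
  proof
    show "inj h'"
    proof (rule injI)
      fix r r' assume e: "h' r = h' r'"
      show "r = r'"
      proof (cases "r = r0"; cases "r' = r0")
        assume "r = r0" "r' = r0" then show ?thesis by simp
      next
        assume "r = r0" "r' \<noteq> r0"
        then have "h r' = (i, m)" using e by (simp add: h'_def)
        then show ?thesis using imn him by (metis rangeI)
      next
        assume "r \<noteq> r0" "r' = r0"
        then have "h r = (i, m)" using e by (simp add: h'_def)
        then show ?thesis using imn him by (metis rangeI)
      next
        assume "r \<noteq> r0" "r' \<noteq> r0"
        then have "h r = h r'" using e by (simp add: h'_def)
        then show ?thesis using hinj by (simp add: inj_eq)
      qed
    qed
    have e1: "h' ` UNIV = h ` (UNIV - {r0}) \<union> {(i, m)}" by (auto simp: h'_def)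
    have e2: "h ` (UNIV - {r0}) = AJ J - {(i, 0)}" using hinj him hr0 by (simp add: image_set_diff)
    show "h' ` UNIV = AJ (J(i := 0))" using AJ' e1 e2 by simp
  qed
  define Rest where "Rest = {..n i} - {0, m}"
  have asum: "a i m = - a i 0 - (\<Sum>j\<in>Rest. a i j)"
  proof -
    have e1: "0 = (\<Sum>j\<le>n i. a i j)" using a_sum by simp
    have e2: "(\<Sum>j\<le>n i. a i j) = a i 0 + (\<Sum>j\<in>{..n i} - {0}. a i j)" by (simp add: sum.remove)
    have e3: "(\<Sum>j\<in>{..n i} - {0}. a i j) = a i m + (\<Sum>j\<in>{..n i} - {0} - {m}. a i j)"
      using m by (intro sum.remove) auto
    have e4: "{..n i} - {0} - {m} = Rest" by (auto simp: Rest_def)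
    have "0 = a i 0 + (a i m + (\<Sum>j\<in>Rest. a i j))" using e1 e2 e3 e4 by simp
    then show ?thesis by (simp add: algebra_simps eq_neg_iff_add_eq_0)
  qed
  define A where "A = (\<chi> r. if r = r0 then - aF (h r) else aF (h r))"
  have rowA: "row j A = aF (h j)" if "j \<noteq> r0" for j using that by (simp add: A_def row_def)
  have rowA0: "row r0 A = - a i 0" by (simp add: A_def row_def hr0 aF_def vec_eq_iff)
  define x where "x = - (\<Sum>j\<in>Rest. a i j)"
  have xspan: "x \<in> vec.span {row j A |j. j \<noteq> r0}"
  proof -
    have "a i j \<in> {row j A |j. j \<noteq> r0}" if "j \<in> Rest" for j
    proof -
      have "(i, j) \<in> AJ J" using that i by (auto simp: Rest_def AJ_def Box_def m_def)
      then obtain r where r: "h r = (i, j)" using him by (metis imageE UNIV_I)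
      have "r \<noteq> r0" using r hr0 that by (auto simp: Rest_def)
      then have "row r A = a i j" using rowA r by (simp add: aF_def)
      then show ?thesis using \<open>r \<noteq> r0\<close> by (auto intro!: exI[of _ r])
    qed
    then have "(\<Sum>j\<in>Rest. a i j) \<in> span {row j A |j. j \<noteq> r0}"
      by (intro span_sum span_base) auto
    then show ?thesis unfolding x_def span_vec_eq by (rule span_neg)
  qed
  have "det (\<chi> kk. if kk = r0 then row r0 A + x else row kk A) = det A"
    by (rule det_row_span[OF xspan])
  moreover have "(\<chi> kk. if kk = r0 then row r0 A + x else row kk A) = Rm h'"
    using rowA rowA0 asum by (auto simp: Rm_def h'_def x_def aF_def vec_eq_iff)
  moreover have "det A = - det (Rm h)"
  proof -
    have "A = (\<chi> r. if r = r0 then (-1) *s aF (h r) else aF (h r))"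
      by (simp add: A_def vec_eq_iff)
    then have "det A = (-1) * det (\<chi> r. if r = r0 then aF (h r) else aF (h r))"
      using det_row_mul[of r0 "-1" "\<lambda>r. aF (h r)" "\<lambda>r. aF (h r)"] by simp
    then show ?thesis by (simp add: Rm_def)
  qed
  ultimately have "\<bar>det (Rm h')\<bar> = \<bar>det (Rm h)\<bar>" by simp
  then show ?thesis using bij' by blast
qed

definition Dabs :: "(nat \<Rightarrow> nat) \<Rightarrow> real" where
  "Dabs J = \<bar>det (Rm (SOME h. bij_betw h (UNIV::'d set) (AJ J)))\<bar>"

lemma Dabs_any: assumes J: "J \<in> T" and h: "bij_betw h (UNIV::'d set) (AJ J)"
  shows "\<bar>det (Rm h)\<bar> = Dabs J"
  unfolding Dabs_def using det_bij_indep[OF h someI_ex[OF ex_bij[OF J]]] .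

definition J0 :: "nat \<Rightarrow> nat" where "J0 = restrict (\<lambda>_. 0) {..<k}"

lemma J0_T: "J0 \<in> T" by (simp add: J0_def T_def)

lemma Dabs_const: assumes J: "J \<in> T" shows "Dabs J = Dabs J0"
proof -
  have "\<forall>J\<in>T. card {i\<in>{..<k}. J i \<noteq> 0} = N \<longrightarrow> Dabs J = Dabs J0" for N
  proof (induction N)
    case 0
    show ?case
    proof (intro ballI impI)
      fix J assume J: "J \<in> T" and c: "card {i\<in>{..<k}. J i \<noteq> 0} = 0"
      then have "{i\<in>{..<k}. J i \<noteq> 0} = {}" by simp
      have "J i = J0 i" for i
      proof (cases "i < k")
        case True then show ?thesis using \<open>{i\<in>{..<k}. J i \<noteq> 0} = {}\<close> by (auto simp: J0_def)
      next
        case False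
        have "J \<in> extensional {..<k}" using J by (simp add: T_def PiE_def)
        then show ?thesis using False by (simp add: J0_def extensional_def)
      qed
      then have "J = J0" by (rule ext)
      then show "Dabs J = Dabs J0" by simp
    qed
  next
    case (Suc N)
    show ?case
    proof (intro ballI impI)
      fix J assume J: "J \<in> T" and c: "card {i\<in>{..<k}. J i \<noteq> 0} = Suc N"
      have "{i\<in>{..<k}. J i \<noteq> 0} \<noteq> {}" using c by (metis card.empty nat.distinct(1))
      then obtain i where i: "i < k" "J i \<noteq> 0" by blast
      define J' where "J' = J(i := 0)"
      have J'T: "J' \<in> T" using J i by (auto simp: J'_def T_def PiE_def Pi_def extensional_def)
      have "{i'\<in>{..<k}. J' i' \<noteq> 0} = {i'\<in>{..<k}. J i' \<noteq> 0} - {i}" by (auto simp: J'_def)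
      then have "card {i'\<in>{..<k}. J' i' \<noteq> 0} = N" using c i by simp
      then have IH: "Dabs J' = Dabs J0" using Suc.IH J'T by blast
      obtain h where h: "bij_betw h (UNIV::'d set) (AJ J)" using ex_bij[OF J] by blast
      obtain h' where h': "bij_betw h' (UNIV::'d set) (AJ J')" "\<bar>det (Rm h')\<bar> = \<bar>det (Rm h)\<bar>"
        using det_step[OF J i h] unfolding J'_def by blast
      have "Dabs J = \<bar>det (Rm h)\<bar>" using Dabs_any[OF J h] by simp
      also have "\<dots> = Dabs J'" using Dabs_any[OF J'T h'(1)] h'(2) by simp
      finally show "Dabs J = Dabs J0" using IH by simp
    qed
  qed
  then show ?thesis using J by blast
qed

lemma det_nz: assumes J: "J \<in> T" and h: "bij_betw h (UNIV::'d set) (AJ J)"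
  shows "det (Rm h) \<noteq> 0"
proof -
  define C :: "real^'d^'d" where "C = (\<chi> t s. f (wG J (h s)) $ t)"
  have hA: "h r \<in> AJ J" for r using h by (auto simp: bij_betw_def)
  have hinj: "inj h" using h by (simp add: bij_betw_def)
  have "Rm h ** C = mat 1"
  proof -
    have "(Rm h ** C) $ r $ s = (if r = s then 1 else 0)" for r s
    proof -
      have "(Rm h ** C) $ r $ s = aF (h r) \<bullet> f (wG J (h s))"
        by (simp add: matrix_matrix_mult_def Rm_def C_def inner_vec_def)
      also have "\<dots> = (if h r = h s then 1 else 0)" using aF_wG[OF J hA hA] by simp
      also have "\<dots> = (if r = s then 1 else 0)" using hinj by (simp add: inj_eq)
      finally show ?thesis .
    qed
    then show ?thesis by (simp add: vec_eq_iff mat_def)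
  qed
  then have "det (Rm h) * det C = 1" using det_mul[of "Rm h" C] by simp
  then show ?thesis by auto
qed

lemma D0_pos: "Dabs J0 > 0"
proof -
  obtain h where h: "bij_betw h (UNIV::'d set) (AJ J0)" using ex_bij[OF J0_T] by blast
  show ?thesis using Dabs_any[OF J0_T h] det_nz[OF J0_T h] by simp
qed


lemma Cf_inj_AJ: "J \<in> T \<Longrightarrow> inj_on Cf (AJ J)"
  using Cf_inj AJ_Idx1 inj_on_subset by blast

lemma normal_det_V0: assumes J: "J \<in> T"
  shows "normal_det P (V0 J) = Dabs J0 / (\<Prod>F\<in>AJ J. norm (aF F))"
proof -
  obtain h where h: "bij_betw h (UNIV::'d set) (AJ J)" using ex_bij[OF J] by blast
  have bC: "bij_betw Cf (AJ J) (Cf ` AJ J)" using Cf_inj_AJ[OF J] by (simp add: bij_betw_def)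
  have "bij_betw (Cf \<circ> h) (UNIV::'d set) (facets_at P (V0 J))"
    unfolding facets_at_V0[OF J] by (rule bij_betw_trans[OF h bC])
  then have ex: "\<exists>g. bij_betw g (UNIV::'d set) (facets_at P (V0 J))" by blast
  define g where "g = (SOME g. bij_betw g (UNIV::'d set) (facets_at P (V0 J)))"
  have g: "bij_betw g (UNIV::'d set) (Cf ` AJ J)" using someI_ex[OF ex] facets_at_V0[OF J] by (simp add: g_def)
  define h' where "h' = (\<lambda>r. inv_into (AJ J) Cf (g r))"
  have h': "bij_betw h' (UNIV::'d set) (AJ J)"
    unfolding h'_def using bij_betw_trans[OF g bij_betw_inv_into[OF bC]] by (simp add: comp_def)
  have gr: "g r = Cf (h' r)" for r
  proof -
    have "g r \<in> Cf ` AJ J" using g by (auto simp: bij_betw_def)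
    then show ?thesis unfolding h'_def by (simp add: f_inv_into_f)
  qed
  have h'A: "h' r \<in> AJ J" for r using h' by (auto simp: bij_betw_def)
  have on: "outward_normal P (g r) = (- (1 / norm (aF (h' r)))) *s aF (h' r)" for r
    using outward_normal_Cf[of "h' r"] h'A[of r] AJ_Idx1[OF J] gr by (auto simp: scalar_mult_eq_scaleR)
  have "normal_det P (V0 J) = \<bar>det (\<chi> r. outward_normal P (g r))\<bar>"
    unfolding normal_det_def g_def Let_def by simp
  also have "(\<chi> r. outward_normal P (g r)) = (\<chi> r. (- (1 / norm (aF (h' r)))) *s aF (h' r))"
    using on by simp
  also have "det \<dots> = (\<Prod>r\<in>UNIV. - (1 / norm (aF (h' r)))) * det (Rm h')"
    unfolding Rm_def by (rule det_rows_mul)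
  also have "\<bar>\<dots>\<bar> = (\<Prod>r\<in>UNIV. 1 / norm (aF (h' r))) * \<bar>det (Rm h')\<bar>"
    by (simp add: abs_mult abs_prod)
  also have "\<bar>det (Rm h')\<bar> = Dabs J0" using Dabs_any[OF J h'] Dabs_const[OF J] by simp
  also have "(\<Prod>r\<in>UNIV. 1 / norm (aF (h' r))) = (\<Prod>F\<in>AJ J. 1 / norm (aF F))"
    using prod.reindex_bij_betw[OF h', of "\<lambda>F. 1 / norm (aF F)"] by simp
  also have "\<dots> = 1 / (\<Prod>F\<in>AJ J. norm (aF F))" by (simp add: prod_dividef)
  finally show ?thesis by simp
qed

definition GJ :: "(nat \<Rightarrow> nat) \<Rightarrow> real^'d \<Rightarrow> real" where
  "GJ J y = (\<Prod>i<k. lam y i (J i))"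

lemma weight_V0: assumes J: "J \<in> T"
  shows "wachspress_weight P (V0 J) y = fact CARD('d) * Dabs J0 / (\<Prod>F\<in>AJ J. lamF y F)"
proof -
  have nz: "(\<Prod>F\<in>AJ J. norm (aF F)) \<noteq> 0"
    using aF_nz AJ_Idx1[OF J] finite_AJ by (auto simp: prod_zero_iff)
  have "(\<Prod>C\<in>facets_at P (V0 J). (V0 J - y) \<bullet> outward_normal P C)
      = (\<Prod>F\<in>AJ J. (V0 J - y) \<bullet> outward_normal P (Cf F))"
    unfolding facets_at_V0[OF J] by (rule prod.reindex[OF Cf_inj_AJ[OF J], unfolded comp_def])
  also have "\<dots> = (\<Prod>F\<in>AJ J. lamF y F / norm (aF F))"
  proof (rule prod.cong[OF refl])
    fix F assume F: "F \<in> AJ J"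
    have "V0 J \<in> Cf F" using V0_Cf[OF J, of F] F by (auto simp: AJ_def)
    then show "(V0 J - y) \<bullet> outward_normal P (Cf F) = lamF y F / norm (aF F)"
      using normal_dot F AJ_Idx1[OF J] by blast
  qed
  also have "\<dots> = (\<Prod>F\<in>AJ J. lamF y F) / (\<Prod>F\<in>AJ J. norm (aF F))" by (simp add: prod_dividef)
  finally have pr: "(\<Prod>C\<in>facets_at P (V0 J). (V0 J - y) \<bullet> outward_normal P C)
      = (\<Prod>F\<in>AJ J. lamF y F) / (\<Prod>F\<in>AJ J. norm (aF F))" .
  show ?thesis unfolding wachspress_weight_def pr normal_det_V0[OF J] using nz by simp
qed

lemma Box_split: assumes J: "J \<in> T"
  shows "(\<Prod>F\<in>Box. lamF y F) = (\<Prod>F\<in>AJ J. lamF y F) * GJ J y"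
proof -
  define D where "D = (\<lambda>i. (i, J i)) ` {..<k}"
  have BU: "Box = AJ J \<union> D" using T_le[OF J] by (auto simp: Box_def AJ_def D_def)
  have dis: "AJ J \<inter> D = {}" by (auto simp: AJ_def D_def)
  have fD: "finite D" by (simp add: D_def)
  have "(\<Prod>F\<in>Box. lamF y F) = (\<Prod>F\<in>AJ J. lamF y F) * (\<Prod>F\<in>D. lamF y F)"
    unfolding BU by (rule prod.union_disjoint[OF finite_AJ fD dis])
  moreover have "(\<Prod>F\<in>D. lamF y F) = GJ J y"
    unfolding D_def GJ_def by (subst prod.reindex) (auto simp: inj_on_def lamF_def)
  ultimately show ?thesis by simp
qed

lemma sum_GJ: "(\<Sum>J\<in>T. GJ J y) = 1"
proof -
  have "(\<Prod>i<k. \<Sum>j\<le>n i. lam y i j) = (\<Sum>J\<in>T. \<Prod>i<k. lam y i (J i))"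
    unfolding T_def by (rule prod_sum_PiE) auto
  moreover have "(\<Prod>i<k. \<Sum>j\<le>n i. lam y i j) = 1" by (simp add: lam_sum)
  ultimately show ?thesis by (simp add: GJ_def)
qed

lemma finite_vertices: "finite (vertices P)"
  using finite_T vertices_P by simp

lemma wachspress_int_pos:
  assumes J: "J \<in> T" and pos: "\<And>F. F \<in> Box \<Longrightarrow> lamF y F > 0"
  shows "wachspress_interior P y (V0 J) = GJ J y"
proof -
  define Pi where "Pi = (\<Prod>F\<in>Box. lamF y F)"
  have Pi0: "Pi > 0" unfolding Pi_def using pos by (intro prod_pos) auto
  have G0: "GJ J' y > 0" if "J' \<in> T" for J'
  proof -
    have "lam y i (J' i) > 0" if "i < k" for i
      using pos[of "(i, J' i)"] T_le[OF \<open>J' \<in> T\<close> that] that by (simp add: Box_def lamF_def)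
    then show ?thesis unfolding GJ_def by (intro prod_pos) auto
  qed
  define K where "K = fact CARD('d) * Dabs J0"
  have wt: "wachspress_weight P (V0 J') y = K * GJ J' y / Pi" if "J' \<in> T" for J'
  proof -
    have "Pi = (\<Prod>F\<in>AJ J'. lamF y F) * GJ J' y" unfolding Pi_def by (rule Box_split[OF that])
    then have e: "(\<Prod>F\<in>AJ J'. lamF y F) = Pi / GJ J' y" using G0[OF that] by (simp add: field_simps)
    have "wachspress_weight P (V0 J') y = K / (\<Prod>F\<in>AJ J'. lamF y F)" unfolding weight_V0[OF that] K_def ..
    also have "\<dots> = K / (Pi / GJ J' y)" by (simp only: e)
    also have "\<dots> = K * GJ J' y / Pi" by (simp add: divide_divide_eq_right)
    finally show ?thesis .
  qed
  have "(\<Sum>u\<in>vertices P. wachspress_weight P u y) = (\<Sum>J'\<in>T. wachspress_weight P (V0 J') y)"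
    unfolding vertices_P by (rule sum.reindex[OF V0_inj, unfolded comp_def])
  also have "\<dots> = (\<Sum>J'\<in>T. K / Pi * GJ J' y)" using wt by (intro sum.cong) auto
  also have "\<dots> = K / Pi * (\<Sum>J'\<in>T. GJ J' y)" by (rule sum_distrib_left[symmetric])
  also have "\<dots> = K / Pi" by (simp only: sum_GJ mult_1_right)
  finally have s: "(\<Sum>u\<in>vertices P. wachspress_weight P u y) = K / Pi" .
  have K0: "K > 0" unfolding K_def using D0_pos by simp
  show ?thesis unfolding wachspress_interior_def s wt[OF J] using K0 Pi0 by simp
qed

lemma interior_pos: assumes y: "y \<in> interior P" and F: "F \<in> Box" shows "lamF y F > 0"
proof (cases "n (fst F) = 0")
  case True
  obtain i j where Fij: "F = (i, j)" by (cases F)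
  have "i < k" "j = 0" using F Fij True by (auto simp: Box_def)
  then show ?thesis using lam_sum[of i y] True Fij by (simp add: lamF_def)
next
  case False
  then have FI: "F \<in> Idx1" using F by (simp add: Idx1_def)
  obtain ep where ep: "ep > 0" "ball y ep \<subseteq> P" using y mem_interior by blast
  have yP: "y \<in> P" using ep by auto
  then have ge: "lamF y F \<ge> 0" using P_charF F by blast
  show ?thesis
  proof (rule ccontr)
    assume "\<not> lamF y F > 0"
    then have l0: "lamF y F = 0" using ge by simp
    define A where "A = aF F"
    have A0: "A \<noteq> 0" using aF_nz[OF FI] by (simp add: A_def)
    define t where "t = ep / (2 * (norm A + 1))"
    have t0: "t > 0" unfolding t_def using ep by (intro divide_pos_pos) (auto simp: add_nonneg_pos)
    have "t * norm A = ep * (norm A / (2 * (norm A + 1)))" by (simp add: t_def)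
    also have "\<dots> < ep * 1" using ep half_lt[of "norm A"] by (intro mult_strict_left_mono) auto
    finally have "t * norm A < ep" by simp
    then have "y - t *\<^sub>R A \<in> ball y ep" using t0 by (simp add: dist_norm)
    then have "y - t *\<^sub>R A \<in> P" using ep by blast
    then have "lamF (y - t *\<^sub>R A) F \<ge> 0" using P_charF F by blast
    moreover have "lamF (y - t *\<^sub>R A) F = - t * (A \<bullet> A)" using l0
      by (simp add: lamF_eq inner_diff_right A_def)
    moreover have "t * (A \<bullet> A) > 0" using A0 t0 by simp
    ultimately show False by linarith
  qed
qed

lemma convex_P: "convex P"
  unfolding P_Hs by (intro convex_INT ballI) (simp only: Hs_def convex_halfspace_le)

lemma closed_P: "closed P"
  unfolding P_Hs by (intro closed_INT ballI) (simp only: Hs_def closed_halfspace_le)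

lemma interior_ne: "interior P \<noteq> {}"
proof -
  define Os where "Os = (\<Inter>G\<in>Box. {y. aF G \<bullet> y > - betaF G})"
  have "open Os" unfolding Os_def using finite_Box by (intro open_INT) (auto intro: open_halfspace_gt)
  moreover have "Os \<subseteq> P"
  proof
    fix y assume "y \<in> Os"
    then have "lamF y G \<ge> 0" if "G \<in> Box" for G using that by (auto simp: Os_def lamF_eq)
    then show "y \<in> P" using P_charF by blast
  qed
  moreover have "f c \<in> Os"
  proof -
    show ?thesis unfolding Os_def
    proof (rule INT_I)
      fix G assume "G \<in> Box"
      then have "lamF (f c) G > 0" using lam_fS[OF c_S] c_pos by (auto simp: lamF_def Box_def)
      then show "f c \<in> {y. aF G \<bullet> y > - betaF G}" by (simp add: lamF_eq)
    qed
  qed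
  ultimately show ?thesis using interior_maximal by blast
qed

lemma GJ_tendsto: "((\<lambda>y. GJ J y) \<longlongrightarrow> GJ J x) (at x within U)"
  unfolding GJ_def lam_eq by (intro tendsto_intros)

lemma wachspress_V0: assumes J: "J \<in> T" and x: "x \<in> P"
  shows "wachspress P x (V0 J) = GJ J x"
proof (cases "x \<in> interior P")
  case True
  then show ?thesis unfolding wachspress_def using wachspress_int_pos[OF J interior_pos] by simp
next
  case False
  have ev: "eventually (\<lambda>y. GJ J y = wachspress_interior P y (V0 J)) (at x within interior P)"
    unfolding eventually_at using wachspress_int_pos[OF J interior_pos] by (auto intro!: exI[of _ 1])
  have lim: "((\<lambda>y. wachspress_interior P y (V0 J)) \<longlongrightarrow> GJ J x) (at x within interior P)"
    using GJ_tendsto tendsto_cong[OF ev] by blast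
  have "closure (interior P) = closure P" by (rule convex_closure_interior[OF convex_P interior_ne])
  then have "x \<in> closure (interior P)" using x closed_P by simp
  then have "x islimpt interior P" using False by (simp add: closure_def)
  then have nt: "\<not> trivial_limit (at x within interior P)" by (simp add: trivial_limit_within)
  show ?thesis unfolding wachspress_def using False tendsto_Lim[OF nt lim] by simp
qed


lemma grp: fixes Q :: "(nat \<Rightarrow> nat) \<Rightarrow> real" and g :: "nat \<Rightarrow> real" assumes i: "i < k"
  shows "(\<Sum>J\<in>T. Q J * g (J i)) = (\<Sum>j\<le>n i. g j * (\<Sum>J\<in>T. Q J * (if J i = j then 1 else 0)))"
proof -
  have "(\<Sum>J\<in>T. Q J * g (J i)) = (\<Sum>J\<in>T. \<Sum>j\<le>n i. if J i = j then Q J * g j else 0)"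
  proof (rule sum.cong[OF refl])
    fix J assume "J \<in> T"
    then have "J i \<in> {..n i}" using T_le i by simp
    then show "Q J * g (J i) = (\<Sum>j\<le>n i. if J i = j then Q J * g j else 0)"
      by (simp add: sum.delta)
  qed
  also have "\<dots> = (\<Sum>j\<le>n i. \<Sum>J\<in>T. if J i = j then Q J * g j else 0)" by (rule sum.swap)
  also have "\<dots> = (\<Sum>j\<le>n i. g j * (\<Sum>J\<in>T. Q J * (if J i = j then 1 else 0)))"
  proof (rule sum.cong[OF refl])
    fix j
    have "g j * (\<Sum>J\<in>T. Q J * (if J i = j then 1 else 0)) = (\<Sum>J\<in>T. g j * (Q J * (if J i = j then 1 else 0)))"
      by (rule sum_distrib_left)
    also have "\<dots> = (\<Sum>J\<in>T. if J i = j then Q J * g j else 0)" by (intro sum.cong refl) auto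
    finally show "(\<Sum>J\<in>T. if J i = j then Q J * g j else 0) = g j * (\<Sum>J\<in>T. Q J * (if J i = j then 1 else 0))" by simp
  qed
  finally show ?thesis .
qed

lemma marg_GJ: assumes i: "i < k" and j: "j \<le> n i"
  shows "(\<Sum>J\<in>T. GJ J x * (if J i = j then 1 else 0)) = lam x i j"
proof -
  define Gf where "Gf = (\<lambda>l j'. if l = i then (if j' = j then lam x l j' else 0) else lam x l j')"
  have "(\<Prod>l<k. \<Sum>j'\<le>n l. Gf l j') = (\<Sum>J\<in>T. \<Prod>l<k. Gf l (J l))"
    unfolding T_def by (rule prod_sum_PiE) auto
  moreover have "(\<Prod>l<k. \<Sum>j'\<le>n l. Gf l j') = lam x i j"
  proof -
    have "(\<Sum>j'\<le>n l. Gf l j') = (if l = i then lam x i j else 1)" if "l < k" for l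
      using that j lam_sum[of l x] by (simp add: Gf_def sum.delta')
    then have "(\<Prod>l<k. \<Sum>j'\<le>n l. Gf l j') = (\<Prod>l<k. if l = i then lam x i j else 1)"
      by (intro prod.cong) auto
    also have "\<dots> = lam x i j" using i by (simp add: prod.delta)
    finally show ?thesis .
  qed
  moreover have "(\<Prod>l<k. Gf l (J l)) = GJ J x * (if J i = j then 1 else 0)" for J
  proof (cases "J i = j")
    case True
    then have "(\<Prod>l<k. Gf l (J l)) = (\<Prod>l<k. lam x l (J l))" by (intro prod.cong) (auto simp: Gf_def)
    then show ?thesis using True by (simp add: GJ_def)
  next
    case False
    have "Gf i (J i) = 0" using False by (simp add: Gf_def)
    then have "(\<Prod>l<k. Gf l (J l)) = 0" using i by (intro prod_zero) auto
    then show ?thesis using False by simp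
  qed
  ultimately show ?thesis by simp
qed

lemma lam_comb: fixes Q :: "(nat \<Rightarrow> nat) \<Rightarrow> real" assumes "(\<Sum>J\<in>T. Q J) = 1"
  shows "lam (\<Sum>J\<in>T. Q J *\<^sub>R V0 J) i j = (\<Sum>J\<in>T. Q J * lam (V0 J) i j)"
proof -
  have "lam (\<Sum>J\<in>T. Q J *\<^sub>R V0 J) i j = (\<Sum>J\<in>T. Q J * (a i j \<bullet> V0 J)) + beta i j"
    by (simp add: lam_eq inner_sum_right)
  also have "\<dots> = (\<Sum>J\<in>T. Q J * (a i j \<bullet> V0 J)) + (\<Sum>J\<in>T. Q J) * beta i j" using assms by simp
  also have "\<dots> = (\<Sum>J\<in>T. Q J * lam (V0 J) i j)"
    by (simp add: lam_eq sum_distrib_right sum.distrib algebra_simps)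
  finally show ?thesis .
qed

lemma marg_Q: fixes Q :: "(nat \<Rightarrow> nat) \<Rightarrow> real" assumes s1: "(\<Sum>J\<in>T. Q J) = 1" and sx: "(\<Sum>J\<in>T. Q J *\<^sub>R V0 J) = x"
    and i: "i < k"
  shows "(\<Sum>J\<in>T. Q J * (if J i = j then 1 else 0)) = lam x i j"
proof -
  have "lam x i j = (\<Sum>J\<in>T. Q J * lam (V0 J) i j)" using lam_comb[OF s1, of i j] sx by simp
  also have "\<dots> = (\<Sum>J\<in>T. Q J * (if J i = j then 1 else 0))"
    using i by (intro sum.cong refl) (auto simp: lam_V0 e_def)
  finally show ?thesis by simp
qed

lemma Q_le_marg: fixes Q :: "(nat \<Rightarrow> nat) \<Rightarrow> real" assumes Q0: "\<And>J. J \<in> T \<Longrightarrow> Q J \<ge> 0" and J: "J \<in> T" and i: "i < k"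
  shows "Q J \<le> (\<Sum>J'\<in>T. Q J' * (if J' i = J i then 1 else 0))"
proof -
  have "Q J * (if J i = J i then 1 else 0) \<le> (\<Sum>J'\<in>T. Q J' * (if J' i = J i then 1 else 0))"
    by (rule member_le_sum[where f="\<lambda>J'. Q J' * (if J' i = J i then 1 else 0)"]) (use J Q0 finite_T in auto)
  then show ?thesis by simp
qed

lemma ent_marg:
  fixes Q :: "(nat \<Rightarrow> nat) \<Rightarrow> real"
  assumes xP: "x \<in> P" and Q0: "\<And>J. J \<in> T \<Longrightarrow> Q J \<ge> 0"
    and mg: "\<And>i j. i < k \<Longrightarrow> j \<le> n i \<Longrightarrow> (\<Sum>J\<in>T. Q J * (if J i = j then 1 else 0)) = lam x i j"
  shows "(\<Sum>J\<in>T. Q J * ln (GJ J x)) = (\<Sum>i<k. \<Sum>j\<le>n i. lam x i j * ln (lam x i j))"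
proof -
  have pt: "Q J * ln (GJ J x) = Q J * (\<Sum>i<k. ln (lam x i (J i)))" if J: "J \<in> T" for J
  proof (cases "Q J = 0")
    case True then show ?thesis by simp
  next
    case False
    then have Qp: "Q J > 0" using Q0[OF J] by simp
    have pos: "lam x i (J i) > 0" if "i < k" for i
      using Q_le_marg[of Q, OF Q0 J that] mg[OF that T_le[OF J that]] Qp by simp
    have nz: "\<And>i. i \<in> {..<k} \<Longrightarrow> lam x i (J i) \<noteq> 0" using pos by (metis lessThan_iff less_irrefl)
    have "ln (GJ J x) = (\<Sum>i<k. ln (lam x i (J i)))" unfolding GJ_def
      by (rule ln_prod[OF finite_lessThan nz])
    then show ?thesis by simp
  qed
  have "(\<Sum>J\<in>T. Q J * ln (GJ J x)) = (\<Sum>J\<in>T. \<Sum>i<k. Q J * ln (lam x i (J i)))"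
    using pt by (simp add: sum_distrib_left)
  also have "\<dots> = (\<Sum>i<k. \<Sum>J\<in>T. Q J * ln (lam x i (J i)))" by (rule sum.swap)
  also have "\<dots> = (\<Sum>i<k. \<Sum>j\<le>n i. ln (lam x i j) * (\<Sum>J\<in>T. Q J * (if J i = j then 1 else 0)))"
    by (intro sum.cong refl grp[where g="\<lambda>j. ln (lam x _ j)"]) simp
  also have "\<dots> = (\<Sum>i<k. \<Sum>j\<le>n i. lam x i j * ln (lam x i j))"
    using mg by (intro sum.cong refl) (auto simp: mult.commute)
  finally show ?thesis .
qed

lemma gibbs_ineq:
  fixes Q R :: "(nat \<Rightarrow> nat) \<Rightarrow> real"
  assumes Q0: "\<And>J. J \<in> T \<Longrightarrow> Q J \<ge> 0" and R0: "\<And>J. J \<in> T \<Longrightarrow> R J \<ge> 0"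
    and sQ: "(\<Sum>J\<in>T. Q J) = 1" and sR: "(\<Sum>J\<in>T. R J) = 1"
    and QR: "\<And>J. J \<in> T \<Longrightarrow> Q J > 0 \<Longrightarrow> R J > 0"
  shows "(\<Sum>J\<in>T. Q J * ln (R J)) \<le> (\<Sum>J\<in>T. Q J * ln (Q J))"
    and "(\<Sum>J\<in>T. Q J * ln (R J)) = (\<Sum>J\<in>T. Q J * ln (Q J)) \<Longrightarrow> \<forall>J\<in>T. Q J = R J"
proof -
  define d where "d J = (R J - Q J) - (Q J * ln (R J) - Q J * ln (Q J))" for J
  have d0: "d J \<ge> 0" if J: "J \<in> T" for J
  proof (cases "Q J = 0")
    case True then show ?thesis using R0[OF J] by (simp add: d_def)
  next
    case False
    then have Qp: "Q J > 0" using Q0[OF J] by simp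
    have Rp: "R J > 0" using QR[OF J Qp] .
    have "ln (R J / Q J) \<le> R J / Q J - 1" using Qp Rp by (intro ln_le_minus_one) simp
    then have "Q J * ln (R J / Q J) \<le> Q J * (R J / Q J - 1)" using Qp by (intro mult_left_mono) auto
    then have "Q J * (ln (R J) - ln (Q J)) \<le> R J - Q J" using Qp Rp by (simp add: ln_div right_diff_distrib)
    then show ?thesis by (simp add: d_def right_diff_distrib)
  qed
  have sd: "(\<Sum>J\<in>T. d J) = - ((\<Sum>J\<in>T. Q J * ln (R J)) - (\<Sum>J\<in>T. Q J * ln (Q J)))"
    using sQ sR by (simp add: d_def sum_subtractf)
  have "(\<Sum>J\<in>T. d J) \<ge> 0" using d0 by (intro sum_nonneg) auto
  then show "(\<Sum>J\<in>T. Q J * ln (R J)) \<le> (\<Sum>J\<in>T. Q J * ln (Q J))" using sd by simp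
  assume eq: "(\<Sum>J\<in>T. Q J * ln (R J)) = (\<Sum>J\<in>T. Q J * ln (Q J))"
  then have "(\<Sum>J\<in>T. d J) = 0" using sd by simp
  then have dz: "\<forall>J\<in>T. d J = 0" using sum_nonneg_eq_0_iff[OF finite_T] d0 by blast
  show "\<forall>J\<in>T. Q J = R J"
  proof
    fix J assume J: "J \<in> T"
    show "Q J = R J"
    proof (cases "Q J = 0")
      case True
      have "d J = 0" using dz J by blast
      then show ?thesis using True by (simp add: d_def)
    next
      case False
      then have Qp: "Q J > 0" using Q0[OF J] by simp
      have Rp: "R J > 0" using QR[OF J Qp] .
      have "Q J * (ln (R J) - ln (Q J)) = R J - Q J" using dz J by (simp add: d_def right_diff_distrib)
      then have "Q J * ln (R J / Q J) = Q J * (R J / Q J - 1)" using Qp Rp by (simp add: ln_div right_diff_distrib)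
      then have "ln (R J / Q J) = R J / Q J - 1" using Qp by simp
      then have "R J / Q J = 1" using Qp Rp by (intro ln_eq_minus_one) auto
      then show ?thesis using Qp by simp
    qed
  qed
qed

lemma gibbs_V0: assumes xP: "x \<in> P" and J: "J \<in> T"
  shows "gibbs (vertices P) x (V0 J) = GJ J x"
proof -
  define V where "V = V0 ` T"
  define R where "R J' = GJ J' x" for J'
  define r where "r v = (if v \<in> V then R (inv_into T V0 v) else 0)" for v
  have rV: "r (V0 J') = R J'" if "J' \<in> T" for J' using that V0_inj by (simp add: r_def V_def)
  have pS: "lam x \<in> S" using lam_S[OF xP] .
  have R0: "R J' \<ge> 0" for J' unfolding R_def GJ_def using memS_D(2)[OF pS] by (intro prod_nonneg) auto
  have sR: "(\<Sum>J'\<in>T. R J') = 1" using sum_GJ by (simp add: R_def)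
  have mR: "(\<Sum>J'\<in>T. R J' * (if J' i = j then 1 else 0)) = lam x i j" if "i < k" "j \<le> n i" for i j
    using marg_GJ[OF that] by (simp add: R_def)
  have HR: "(\<Sum>J'\<in>T. R J' * ln (R J')) = (\<Sum>i<k. \<Sum>j\<le>n i. lam x i j * ln (lam x i j))"
    using ent_marg[of x R, OF xP R0 mR] by (simp add: R_def)
  have reidx: "(\<Sum>v\<in>V. g v) = (\<Sum>J'\<in>T. g (V0 J'))" for g :: "real^'d \<Rightarrow> 'b::comm_monoid_add"
    unfolding V_def by (rule sum.reindex[OF V0_inj, unfolded comp_def])
  have ent: "entropy V q = - (\<Sum>J'\<in>T. q (V0 J') * ln (q (V0 J')))" for q
  proof -
    have ifln: "(if t = 0 then 0 else t * ln t) = t * ln (t::real)" for t by simp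
    show ?thesis unfolding entropy_def reidx ifln ..
  qed
  have rBD: "r \<in> barycentric_dists V x"
    unfolding barycentric_dists_def
  proof (intro CollectI conjI allI impI ballI)
    fix v assume "v \<notin> V" then show "r v = 0" by (simp add: r_def)
  next
    fix v assume "v \<in> V" then show "0 \<le> r v" using R0 by (simp add: r_def)
  next
    show "(\<Sum>v\<in>V. r v) = 1" unfolding reidx using rV sR by simp
  next
    define y where "y = (\<Sum>J'\<in>T. R J' *\<^sub>R V0 J')"
    have "lam y = lam x"
    proof (intro ext)
      fix i j show "lam y i j = lam x i j"
      proof (cases "i < k \<and> j \<le> n i")
        case True
        have "lam y i j = (\<Sum>J'\<in>T. R J' * lam (V0 J') i j)" unfolding y_def by (rule lam_comb[OF sR])
        also have "\<dots> = (\<Sum>J'\<in>T. R J' * (if J' i = j then 1 else 0))"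
          using True by (intro sum.cong refl) (auto simp: lam_V0 e_def)
        also have "\<dots> = lam x i j" using mR True by simp
        finally show ?thesis .
      next
        case False then show ?thesis using lam_out by auto
      qed
    qed
    then have "f (lam y) = f (lam x)" by simp
    then have "y = x" by (simp only: f_lam)
    then show "(\<Sum>v\<in>V. r v *\<^sub>R v) = x" unfolding reidx y_def using rV by simp
  qed
  have key: "entropy V q \<le> entropy V r \<and> (entropy V q = entropy V r \<longrightarrow> q = r)"
    if qBD: "q \<in> barycentric_dists V x" for q
  proof -
    define Q where "Q J' = q (V0 J')" for J'
    have qout: "q v = 0" if "v \<notin> V" for v using qBD that by (simp add: barycentric_dists_def)
    have Q0: "Q J' \<ge> 0" if "J' \<in> T" for J' using qBD that by (simp add: barycentric_dists_def Q_def V_def)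
    have sQ: "(\<Sum>J'\<in>T. Q J') = 1" using qBD unfolding barycentric_dists_def reidx by (simp add: Q_def)
    have sxQ: "(\<Sum>J'\<in>T. Q J' *\<^sub>R V0 J') = x" using qBD unfolding barycentric_dists_def reidx by (simp add: Q_def)
    have mQ: "(\<Sum>J'\<in>T. Q J' * (if J' i = j then 1 else 0)) = lam x i j" if "i < k" "j \<le> n i" for i j
      using marg_Q[OF sQ sxQ that(1)] .
    have QR: "R J' > 0" if "J' \<in> T" "Q J' > 0" for J'
    proof -
      have "lam x i (J' i) > 0" if "i < k" for i
        using Q_le_marg[of Q, OF Q0 \<open>J' \<in> T\<close> that] mQ[OF that T_le[OF \<open>J' \<in> T\<close> that]] \<open>Q J' > 0\<close> by simp
      then show ?thesis unfolding R_def GJ_def by (intro prod_pos) auto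
    qed
    have HQR: "(\<Sum>J'\<in>T. Q J' * ln (R J')) = (\<Sum>i<k. \<Sum>j\<le>n i. lam x i j * ln (lam x i j))"
      using ent_marg[of x Q, OF xP Q0 mQ] by (simp add: R_def)
    have eq1: "entropy V q = - (\<Sum>J'\<in>T. Q J' * ln (Q J'))" by (simp add: ent Q_def)
    have eq2: "entropy V r = - (\<Sum>J'\<in>T. R J' * ln (R J'))" using rV by (simp add: ent)
    have ineq: "(\<Sum>J'\<in>T. Q J' * ln (R J')) \<le> (\<Sum>J'\<in>T. Q J' * ln (Q J'))"
      by (rule gibbs_ineq(1)[of Q R, OF Q0 R0 sQ sR QR])
    have le: "entropy V q \<le> entropy V r" using eq1 eq2 HR HQR ineq by simp
    have "q = r" if "entropy V q = entropy V r"
    proof -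
      have "(\<Sum>J'\<in>T. Q J' * ln (R J')) = (\<Sum>J'\<in>T. Q J' * ln (Q J'))" using that eq1 eq2 HR HQR by simp
      then have QRe: "\<forall>J'\<in>T. Q J' = R J'" using gibbs_ineq(2)[of Q R] Q0 R0 sQ sR QR by blast
      show "q = r"
      proof (intro ext)
        fix v show "q v = r v"
        proof (cases "v \<in> V")
          case True
          then obtain J' where "J' \<in> T" "v = V0 J'" by (auto simp: V_def)
          then show ?thesis using QRe rV by (simp add: Q_def)
        next
          case False then show ?thesis using qout by (simp add: r_def)
        qed
      qed
    qed
    then show ?thesis using le by blast
  qed
  have "gibbs V x = r"
    unfolding gibbs_def
  proof (rule the_equality)
    show "r \<in> barycentric_dists V x \<and> (\<forall>q\<in>barycentric_dists V x. entropy V q \<le> entropy V r)"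
      using rBD key by blast
  next
    fix p' assume H: "p' \<in> barycentric_dists V x \<and> (\<forall>q\<in>barycentric_dists V x. entropy V q \<le> entropy V p')"
    then have "entropy V r \<le> entropy V p'" using rBD by blast
    moreover have "entropy V p' \<le> entropy V r" using key H by blast
    ultimately show "p' = r" using key H by (meson order.antisym)
  qed
  then show ?thesis using rV[OF J] vertices_P by (simp add: V_def R_def)
qed



lemma main: assumes x: "x \<in> P" and v: "v \<in> vertices P"
  shows "wachspress P x v = gibbs (vertices P) x v"
proof -
  obtain J where J: "J \<in> T" "v = V0 J" using v vertices_P by auto
  then show ?thesis using wachspress_V0[OF J(1) x] gibbs_V0[OF x J(1)] by simp
qed

end

theorem theorem5p5:
  fixes P :: "(real^'n) set" and x v :: "real^'n"
  assumes "polytope P"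
    and "aff_dim P = int CARD('n)"
    and "semisimplex P"
    and "x \<in> P"
    and "v \<in> vertices P"
  shows "wachspress P x v = gibbs (vertices P) x v"
proof -
  obtain k n and b :: "nat \<Rightarrow> nat \<Rightarrow> real^'n" where inj: "inj_on (prod_simplex_map k n b) (prod_simplex k n)"
    and PP: "prod_simplex_map k n b ` prod_simplex k n = P"
    using assms(3) unfolding semisimplex_def by blast
  have ps: "psx k n b" unfolding psx_def using inj assms(2) PP by simp
  have "wachspress (prod_simplex_map k n b ` prod_simplex k n) x v
      = gibbs (vertices (prod_simplex_map k n b ` prod_simplex k n)) x v"
    by (rule psx.main[OF ps]) (use assms PP in simp_all)
  then show ?thesis using PP by simp
qed

end
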